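(* Let $H\in(0,1)$, $\alpha\in(0,1)$, $b\in\{2,3,\dots\}$ with $\alpha b^H<1$, and let $p=1/H$. Let $W$ be a fractional Brownian motion with Hurst parameter $H$, independent of an i.i.d. sequence $U_1,U_2,\dots$ uniformly distributed on $\{0,1,\dots,b-1\}$, and set $R_m:=\sum_{i=1}^mU_ib^{i-1}$. Let $$G_n:=\sum_{m=1}^n\alpha^{-m}\big(W((R_m+1)b^{-m})-W(R_mb^{-m})\big).$$ Then, as $n\to\infty$, $$(\alpha^pb)^n\,\mathbb E\big[|G_n|^p\big]\longrightarrow\frac{c_H}{(1-\alpha^2b^{2H})^{p/2}},\qquad c_H:=\frac{2^{1/(2H)}\Gamma(\frac{H+1}{2H})}{\sqrt\pi},$$ where the expectation is with respect to the joint law of $W$ and $(U_i)$. *)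

theory Defs
  imports "HOL-Probability.Probability"
begin

definition fbm_cov :: "real \<Rightarrow> real \<Rightarrow> real \<Rightarrow> real" where
  "fbm_cov H s t = (\<bar>s\<bar> powr (2*H) + \<bar>t\<bar> powr (2*H) - \<bar>t - s\<bar> powr (2*H)) / 2"

definition gaussian_rv :: "'a measure \<Rightarrow> ('a \<Rightarrow> real) \<Rightarrow> real \<Rightarrow> real \<Rightarrow> bool" where
  "gaussian_rv M X mu v \<longleftrightarrow> X \<in> borel_measurable M \<and> 0 \<le> v \<and>
     (if v = 0 then (AE \<omega> in M. X \<omega> = mu)
      else distributed M lborel X (normal_density mu (sqrt v)))"

definition is_fbm :: "'a measure \<Rightarrow> real \<Rightarrow> (real \<Rightarrow> 'a \<Rightarrow> real) \<Rightarrow> bool" where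
  "is_fbm M H W \<longleftrightarrow>
     (\<forall>(S::real set) (c::real \<Rightarrow> real). finite S \<and> S \<subseteq> {0..} \<longrightarrow>
        gaussian_rv M (\<lambda>\<omega>. \<Sum>t\<in>S. c t * W t \<omega>) 0
          (\<Sum>s\<in>S. \<Sum>t\<in>S. c s * c t * fbm_cov H s t))"

definition sigma_W :: "'a measure \<Rightarrow> (real \<Rightarrow> 'a \<Rightarrow> real) \<Rightarrow> 'a set set" where
  "sigma_W M W = sigma_sets (space M)
     (\<Union>t\<in>{0..}. {W t -` A \<inter> space M | A. A \<in> sets borel})"

definition sigma_U :: "'a measure \<Rightarrow> (nat \<Rightarrow> 'a \<Rightarrow> nat) \<Rightarrow> 'a set set" where
  "sigma_U M U = sigma_sets (space M) (\<Union>i\<in>{1..}. {U i -` A \<inter> space M | A. A \<in> (UNIV :: nat set set)})"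

definition digitsum :: "nat \<Rightarrow> (nat \<Rightarrow> 'a \<Rightarrow> nat) \<Rightarrow> nat \<Rightarrow> 'a \<Rightarrow> nat" where
  "digitsum b U m \<omega> = (\<Sum>i=1..m. U i \<omega> * b ^ (i - 1))"

definition c_H :: "real \<Rightarrow> real" where
  "c_H H = 2 powr (1 / (2*H)) * Gamma ((H + 1) / (2*H)) / sqrt pi"

end

theory Submission
  imports Defs
begin


lemma halfline_moment:
  fixes p \<sigma> :: real assumes p: "0 < p" and s: "0 < \<sigma>"
  shows "((\<lambda>x. x powr p * exp (- x\<^sup>2 / (2*\<sigma>\<^sup>2))) has_integral
           Gamma ((p+1)/2) * \<sigma> powr (p+1) * 2 powr ((p-1)/2)) {0..}"
proof -
  define sp where "sp = (p+1)/2"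
  have sp: "0 < sp" using p by (simp add: sp_def)
  define f where "f = (\<lambda>t::real. t powr (sp - 1) / exp t)"
  define g where "g = (\<lambda>x::real. x\<^sup>2 / (2*\<sigma>\<^sup>2))"
  have fi: "(f has_integral Gamma sp) {0..}" unfolding f_def by (rule Gamma_integral_real[OF sp])
  have fabs: "f absolutely_integrable_on {0..}"
    using fi by (intro nonnegative_absolutely_integrable_1) (auto simp: f_def)
  have gS: "g ` {0..} = {0..}"
  proof
    show "g ` {0..} \<subseteq> {0..}" by (auto simp: g_def)
    show "{0..} \<subseteq> g ` {0..}"
    proof
      fix t :: real assume "t \<in> {0..}"
      hence t: "0 \<le> t" by simp
      have "g (\<sigma> * sqrt (2*t)) = t" using s t by (simp add: g_def power_mult_distrib)
      moreover have "\<sigma> * sqrt (2*t) \<in> {0..}" using s t by simp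
      ultimately show "t \<in> g ` {0..}" by (metis image_eqI)
    qed
  qed
  have der: "\<And>x. x \<in> {0..} \<Longrightarrow> (g has_field_derivative (x/\<sigma>\<^sup>2)) (at x within {0..})"
    unfolding g_def using s by (auto intro!: derivative_eq_intros simp: field_simps power2_eq_square)
  have inj: "inj_on g {0..}"
    using s by (auto simp: inj_on_def g_def power2_eq_iff_nonneg)
  have "(\<lambda>x. \<bar>x/\<sigma>\<^sup>2\<bar> * f (g x)) absolutely_integrable_on {0..} \<and>
           integral {0..} (\<lambda>x. \<bar>x/\<sigma>\<^sup>2\<bar> * f (g x)) = Gamma sp"
    using has_absolute_integral_change_of_variables_1'[OF _ der inj, of f "Gamma sp"] gS fabs fi
    by (auto dest: integral_unique)
  hence hi: "((\<lambda>x. \<bar>x/\<sigma>\<^sup>2\<bar> * f (g x)) has_integral Gamma sp) {0..}"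
    using set_lebesgue_integral_eq_integral(1) by (metis absolutely_integrable_on_def has_integral_integral)
  define K where "K = \<sigma> powr (-(p+1)) * 2 powr ((1-p)/2)"
  have K: "K > 0" using s by (simp add: K_def)
  have eq: "\<bar>x/\<sigma>\<^sup>2\<bar> * f (g x) = K * (x powr p * exp (- x\<^sup>2 / (2*\<sigma>\<^sup>2)))" if "x \<in> {0..}" for x
  proof (cases "x = 0")
    case True thus ?thesis using p by (simp add: f_def g_def)
  next
    case False
    hence x: "x > 0" using that by simp
    have "g x powr (sp - 1) = x powr (p-1) * (2*\<sigma>\<^sup>2) powr (-(p-1)/2)"
    proof -
      have "g x powr (sp - 1) = (x\<^sup>2) powr ((p-1)/2) / (2*\<sigma>\<^sup>2) powr ((p-1)/2)"
        unfolding g_def sp_def using x s by (simp add: powr_divide field_simps)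
      also have "(x\<^sup>2) powr ((p-1)/2) = x powr (p-1)"
        using x by (simp add: powr_powr flip: powr_numeral) (simp add: diff_divide_distrib)
      also have "1 / (2*\<sigma>\<^sup>2) powr ((p-1)/2) = (2*\<sigma>\<^sup>2) powr (-(p-1)/2)"
        by (metis powr_minus_divide minus_divide_left)
      ultimately show ?thesis by (metis times_divide_eq_right mult_1_right)
    qed
    moreover have "(2*\<sigma>\<^sup>2) powr (-(p-1)/2) = 2 powr ((1-p)/2) * \<sigma> powr (1-p)"
      using s by (simp add: powr_mult powr_powr flip: powr_numeral) (simp add: diff_divide_distrib)
    moreover have "x powr (p-1) = x powr p / x" using x by (simp add: powr_diff)
    moreover have "\<sigma> powr (1-p) = \<sigma>\<^sup>2 * \<sigma> powr (-(p+1))" using s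
      by (simp add: powr_add[symmetric] flip: powr_numeral)
    ultimately show ?thesis using x s
      by (simp add: f_def K_def g_def exp_minus field_simps)
  qed
  have "((\<lambda>x. K * (x powr p * exp (- x\<^sup>2 / (2*\<sigma>\<^sup>2)))) has_integral Gamma sp) {0..}"
    by (rule has_integral_eq[OF _ hi]) (use eq in blast)
  from has_integral_mult_right[OF this, of "1/K"]
  have "((\<lambda>x. x powr p * exp (- x\<^sup>2 / (2*\<sigma>\<^sup>2))) has_integral Gamma sp / K) {0..}"
    using K by simp
  moreover have "Gamma sp / K = Gamma ((p+1)/2) * \<sigma> powr (p+1) * 2 powr ((p-1)/2)"
  proof -
    have a: "\<sigma> powr (p+1) * \<sigma> powr (-(p+1)) = 1" using s by (simp flip: powr_add)
    have b: "2 powr ((p-1)/2) * 2 powr ((1-p)/2) = (1::real)" by (simp flip: powr_add add: field_simps)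
    have "Gamma sp / K = Gamma sp * ((\<sigma> powr (p+1) * \<sigma> powr (-(p+1))) * (2 powr ((p-1)/2) * 2 powr ((1-p)/2))) / K"
      using a b by simp
    also have "\<dots> = Gamma sp * \<sigma> powr (p+1) * 2 powr ((p-1)/2)" using K unfolding K_def by (simp add: field_simps)
    finally show ?thesis by (simp add: sp_def)
  qed
  ultimately show ?thesis by simp
qed


definition gmom :: "real \<Rightarrow> real" where
  "gmom p = 2 powr (p/2) * Gamma ((p+1)/2) / sqrt pi"

lemma normal_abs_moment:
  fixes p \<sigma> :: real assumes p: "0 < p" and s: "0 < \<sigma>"
  shows "has_bochner_integral lborel (\<lambda>x. normal_density 0 \<sigma> x * \<bar>x\<bar> powr p) (\<sigma> powr p * gmom p)"
proof -
  define I0 where "I0 = Gamma ((p+1)/2) * \<sigma> powr (p+1) * 2 powr ((p-1)/2)"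
  define h where "h = (\<lambda>x::real. \<bar>x\<bar> powr p * exp (- x\<^sup>2 / (2*\<sigma>\<^sup>2)))"
  have I0: "I0 \<ge> 0" unfolding I0_def using p by (intro mult_nonneg_nonneg) (auto intro: Gamma_real_nonneg)
  have hm[measurable]: "h \<in> borel_measurable borel" unfolding h_def by measurable
  have h0: "h 0 = 0" using p by (simp add: h_def)
  have hneg: "h (-x) = h x" for x by (simp add: h_def)
  have pos: "(\<integral>\<^sup>+x. ennreal (h x) * indicator {0..} x \<partial>lborel) = ennreal I0"
  proof -
    have "(\<integral>\<^sup>+x. ennreal (h x) * indicator {0..} x \<partial>lborel) =
          (\<integral>\<^sup>+x. ennreal (x powr p * exp (- x\<^sup>2 / (2*\<sigma>\<^sup>2))) * indicator {0..} x \<partial>lborel)"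
      by (intro nn_integral_cong) (auto simp: h_def indicator_def)
    also have "\<dots> = ennreal I0" unfolding I0_def
      by (rule nn_integral_has_integral_lebesgue'[OF _ halfline_moment[OF p s]]) simp
    finally show ?thesis .
  qed
  have neg: "(\<integral>\<^sup>+x. ennreal (h x) * indicator {..<0} x \<partial>lborel) = ennreal I0"
  proof -
    have "(\<integral>\<^sup>+x. ennreal (h x) * indicator {..<0} x \<partial>lborel) =
        ennreal \<bar>-1\<bar> * (\<integral>\<^sup>+x. ennreal (h (0 + (-1) * x)) * indicator {..<0} (0 + (-1)*x) \<partial>lborel)"
      by (rule nn_integral_real_affine) auto
    also have "\<dots> = (\<integral>\<^sup>+x. ennreal (h x) * indicator {0..} x \<partial>lborel)"
      by (simp, intro nn_integral_cong) (auto simp: indicator_def hneg h0)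
    finally show ?thesis using pos by simp
  qed
  have "(\<integral>\<^sup>+x. ennreal (h x) \<partial>lborel) =
        (\<integral>\<^sup>+x. ennreal (h x) * indicator {0..} x + ennreal (h x) * indicator {..<0} x \<partial>lborel)"
    by (intro nn_integral_cong) (auto simp: indicator_def)
  also have "\<dots> = ennreal I0 + ennreal I0"
    by (subst nn_integral_add) (auto simp: pos neg)
  finally have tot: "(\<integral>\<^sup>+x. ennreal (h x) \<partial>lborel) = ennreal (2 * I0)" using I0 by (simp add: ennreal_plus[symmetric])
  define c where "c = 1 / sqrt (2 * pi * \<sigma>\<^sup>2)"
  have c: "c > 0" using s by (simp add: c_def)
  have nd: "normal_density 0 \<sigma> x * \<bar>x\<bar> powr p = c * h x" for x
    by (simp add: normal_density_def c_def h_def)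
  have "(\<integral>\<^sup>+x. ennreal (normal_density 0 \<sigma> x * \<bar>x\<bar> powr p) \<partial>lborel) = (\<integral>\<^sup>+x. ennreal c * ennreal (h x) \<partial>lborel)"
    using c by (intro nn_integral_cong) (simp add: nd ennreal_mult h_def)
  also have "\<dots> = ennreal c * ennreal (2 * I0)" by (subst nn_integral_cmult) (auto simp: tot)
  also have "\<dots> = ennreal (c * (2 * I0))" using c I0 by (simp add: ennreal_mult)
  also have "c * (2 * I0) = \<sigma> powr p * gmom p"
  proof -
    have "sqrt (2 * pi * \<sigma>\<^sup>2) = sqrt 2 * sqrt pi * \<sigma>" using s by (simp add: real_sqrt_mult)
    moreover have "sqrt 2 = 2 powr (1/2)" by (simp add: powr_half_sqrt)
    moreover have "\<sigma> powr (p+1) = \<sigma> powr p * \<sigma>" using s by (simp add: powr_add)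
    moreover have "2 * 2 powr ((p-1)/2) = 2 powr (1/2) * (2::real) powr (p/2)"
    proof -
      have "2 * 2 powr ((p-1)/2) = 2 powr (1 + (p-1)/2)" by (simp add: powr_add)
      also have "1 + (p-1)/2 = 1/2 + p/2" by (simp add: field_simps)
      finally show ?thesis by (simp add: powr_add)
    qed
    ultimately show ?thesis using s unfolding c_def I0_def gmom_def by (simp add: field_simps)
  qed
  moreover have "0 \<le> gmom p" unfolding gmom_def using p by (auto intro!: Gamma_real_nonneg)
  ultimately show ?thesis
    by (intro has_bochner_integral_nn_integral) (auto intro!: mult_nonneg_nonneg simp: normal_density_def)
qed

lemma gaussian_abs_moment:
  fixes p :: real assumes M: "prob_space M" and p: "0 < p" and X: "gaussian_rv M X 0 v"
  shows "integrable M (\<lambda>\<omega>. \<bar>X \<omega>\<bar> powr p)"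
    "prob_space.expectation M (\<lambda>\<omega>. \<bar>X \<omega>\<bar> powr p) = v powr (p/2) * gmom p"
proof -
  interpret prob_space M by fact
  have Xm[measurable]: "X \<in> borel_measurable M" and v: "0 \<le> v" using X by (auto simp: gaussian_rv_def)
  have "integrable M (\<lambda>\<omega>. \<bar>X \<omega>\<bar> powr p) \<and> expectation (\<lambda>\<omega>. \<bar>X \<omega>\<bar> powr p) = v powr (p/2) * gmom p"
  proof (cases "v = 0")
    case True
    hence ae: "AE \<omega> in M. X \<omega> = 0" using X by (auto simp: gaussian_rv_def)
    hence ae2: "AE \<omega> in M. \<bar>X \<omega>\<bar> powr p = 0" by eventually_elim simp
    have "integrable M (\<lambda>\<omega>. \<bar>X \<omega>\<bar> powr p)"
      by (rule integrable_cong_AE_imp[where g="\<lambda>_. 0"]) (use ae2 in auto)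
    moreover have "expectation (\<lambda>\<omega>. \<bar>X \<omega>\<bar> powr p) = 0"
      using integral_cong_AE[OF _ _ ae2] by simp
    ultimately show ?thesis using True by simp
  next
    case False
    hence v: "v > 0" using v by simp
    define \<sigma> where "\<sigma> = sqrt v"
    have s: "\<sigma> > 0" using v by (simp add: \<sigma>_def)
    have D: "distributed M lborel X (normal_density 0 \<sigma>)" using X False by (simp add: gaussian_rv_def \<sigma>_def)
    have B: "has_bochner_integral lborel (\<lambda>x. normal_density 0 \<sigma> x * \<bar>x\<bar> powr p) (\<sigma> powr p * gmom p)"
      by (rule normal_abs_moment[OF p s])
    have "integrable M (\<lambda>\<omega>. \<bar>X \<omega>\<bar> powr p)"
      using distributed_integrable[OF D, of "\<lambda>x. \<bar>x\<bar> powr p"] B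
      by (auto simp: has_bochner_integral_iff normal_density_nonneg)
    moreover have "expectation (\<lambda>\<omega>. \<bar>X \<omega>\<bar> powr p) = \<sigma> powr p * gmom p"
      using distributed_integral[OF D, of "\<lambda>x. \<bar>x\<bar> powr p"] B
      by (auto simp: has_bochner_integral_iff normal_density_nonneg)
    moreover have "\<sigma> powr p = v powr (p/2)" using v
      by (simp add: \<sigma>_def powr_half_sqrt[symmetric] powr_powr)
    ultimately show ?thesis by simp
  qed
  thus "integrable M (\<lambda>\<omega>. \<bar>X \<omega>\<bar> powr p)"
    "prob_space.expectation M (\<lambda>\<omega>. \<bar>X \<omega>\<bar> powr p) = v powr (p/2) * gmom p" by auto
qed


lemma sum_regroup:
  fixes a F :: "_ \<Rightarrow> real"
  assumes "finite I"
  shows "(\<Sum>s\<in>t ` I. (\<Sum>i\<in>{i\<in>I. t i = s}. a i) * F s) = (\<Sum>i\<in>I. a i * F (t i))"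
proof -
  have "(\<Sum>i\<in>I. a i * F (t i)) = (\<Sum>s\<in>t ` I. \<Sum>i\<in>{i\<in>I. t i = s}. a i * F (t i))"
    by (rule sum.image_gen[OF assms])
  also have "\<dots> = (\<Sum>s\<in>t ` I. (\<Sum>i\<in>{i\<in>I. t i = s}. a i) * F s)"
  proof (intro sum.cong refl)
    fix s assume "s \<in> t ` I"
    have "(\<Sum>i\<in>{i\<in>I. t i = s}. a i * F (t i)) = (\<Sum>i\<in>{i\<in>I. t i = s}. a i * F s)"
      by (rule sum.cong) auto
    also have "\<dots> = (\<Sum>i\<in>{i\<in>I. t i = s}. a i) * F s" by (rule sum_distrib_right[symmetric])
    finally show "(\<Sum>i\<in>{i\<in>I. t i = s}. a i * F (t i)) = (\<Sum>i\<in>{i\<in>I. t i = s}. a i) * F s" .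
  qed
  finally show ?thesis by simp
qed

lemma fbm_lincomb:
  assumes W: "is_fbm M H W" and I: "finite I" and t: "\<And>i. i \<in> I \<Longrightarrow> t i \<ge> 0"
  shows "gaussian_rv M (\<lambda>\<omega>. \<Sum>i\<in>I. a i * W (t i) \<omega>) 0
           (\<Sum>i\<in>I. \<Sum>j\<in>I. a i * a j * fbm_cov H (t i) (t j))"
proof -
  define c where "c = (\<lambda>s. \<Sum>i\<in>{i\<in>I. t i = s}. a i)"
  have S: "finite (t ` I)" "t ` I \<subseteq> {0..}" using I t by auto
  have G: "gaussian_rv M (\<lambda>\<omega>. \<Sum>s\<in>t ` I. c s * W s \<omega>) 0
          (\<Sum>s\<in>t ` I. \<Sum>u\<in>t ` I. c s * c u * fbm_cov H s u)"
    using W S unfolding is_fbm_def by blast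
  have e1: "(\<Sum>s\<in>t ` I. c s * W s \<omega>) = (\<Sum>i\<in>I. a i * W (t i) \<omega>)" for \<omega>
    unfolding c_def by (rule sum_regroup[OF I])
  have "(\<Sum>s\<in>t ` I. \<Sum>u\<in>t ` I. c s * c u * fbm_cov H s u) =
        (\<Sum>s\<in>t ` I. c s * (\<Sum>u\<in>t ` I. c u * fbm_cov H s u))"
    by (simp add: sum_distrib_left mult.assoc)
  also have "\<dots> = (\<Sum>s\<in>t ` I. c s * (\<Sum>j\<in>I. a j * fbm_cov H s (t j)))"
    unfolding c_def by (subst sum_regroup[OF I]) simp
  also have "\<dots> = (\<Sum>i\<in>I. a i * (\<Sum>j\<in>I. a j * fbm_cov H (t i) (t j)))"
    unfolding c_def by (rule sum_regroup[OF I])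
  also have "\<dots> = (\<Sum>i\<in>I. \<Sum>j\<in>I. a i * a j * fbm_cov H (t i) (t j))"
    by (simp add: sum_distrib_left mult.assoc)
  finally show ?thesis using G e1 by simp
qed


definition icov :: "real \<Rightarrow> real \<Rightarrow> real \<Rightarrow> real \<Rightarrow> real \<Rightarrow> real" where
  "icov H l1 r1 l2 r2 = fbm_cov H r1 r2 - fbm_cov H r1 l2 - fbm_cov H l1 r2 + fbm_cov H l1 l2"

lemma sum_J_bool:
  assumes "finite J"
  shows "(\<Sum>i\<in>J \<times> (UNIV::bool set). f i) = (\<Sum>j\<in>J. f (j,True) + f (j,False))"
proof -
  have "(\<Sum>i\<in>J \<times> (UNIV::bool set). f i) = (\<Sum>j\<in>J. \<Sum>e\<in>UNIV. f (j,e))"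
    using sum.Sigma[of J "\<lambda>_. UNIV" "\<lambda>j e. f (j,e)", symmetric] assms by (simp add: case_prod_eta)
  thus ?thesis by (simp add: UNIV_bool add.commute)
qed

lemma incr_gauss:
  assumes W: "is_fbm M H W" and J: "finite J" and lr: "\<And>j. j \<in> J \<Longrightarrow> 0 \<le> l j \<and> 0 \<le> r j"
  shows "gaussian_rv M (\<lambda>\<omega>. \<Sum>j\<in>J. \<beta> j * (W (r j) \<omega> - W (l j) \<omega>)) 0
           (\<Sum>j\<in>J. \<Sum>k\<in>J. \<beta> j * \<beta> k * icov H (l j) (r j) (l k) (r k))"
proof -
  define t where "t = (\<lambda>(j,e::bool). if e then r j else l j)"
  define a where "a = (\<lambda>(j,e::bool). if e then \<beta> j else - \<beta> j)"
  have G: "gaussian_rv M (\<lambda>\<omega>. \<Sum>i\<in>J \<times> UNIV. a i * W (t i) \<omega>) 0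
           (\<Sum>i\<in>J \<times> UNIV. \<Sum>i'\<in>J \<times> UNIV. a i * a i' * fbm_cov H (t i) (t i'))"
    by (rule fbm_lincomb[OF W]) (use J lr in \<open>auto simp: t_def\<close>)
  have e1: "(\<Sum>i\<in>J \<times> UNIV. a i * W (t i) \<omega>) = (\<Sum>j\<in>J. \<beta> j * (W (r j) \<omega> - W (l j) \<omega>))" for \<omega>
    by (simp add: sum_J_bool[OF J] a_def t_def algebra_simps sum_subtractf)
  have e2: "(\<Sum>i\<in>J \<times> UNIV. \<Sum>i'\<in>J \<times> UNIV. a i * a i' * fbm_cov H (t i) (t i')) =
     (\<Sum>j\<in>J. \<Sum>k\<in>J. \<beta> j * \<beta> k * icov H (l j) (r j) (l k) (r k))"
    by (simp add: sum_J_bool[OF J] a_def t_def algebra_simps icov_def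
         sum.distrib sum_subtractf sum_distrib_left sum_negf)
  show ?thesis using G by (simp add: e1 e2)
qed

lemma incr_psd:
  assumes W: "is_fbm M H W" and J: "finite J" and lr: "\<And>j. j \<in> J \<Longrightarrow> 0 \<le> l j \<and> 0 \<le> r j"
  shows "0 \<le> (\<Sum>j\<in>J. \<Sum>k\<in>J. \<beta> j * \<beta> k * icov H (l j) (r j) (l k) (r k))"
  using incr_gauss[OF assms, where \<beta>=\<beta>] by (simp add: gaussian_rv_def)

lemma icov_sym: "icov H l2 r2 l1 r1 = icov H l1 r1 l2 r2"
  by (simp add: icov_def fbm_cov_def abs_minus_commute algebra_simps)

lemma icov_self: "icov H x y x y = \<bar>y - x\<bar> powr (2*H)"
  by (simp add: icov_def fbm_cov_def abs_minus_commute algebra_simps)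

lemma icov_cs:
  assumes W: "is_fbm M H W" and nn: "0 \<le> l1" "0 \<le> r1" "0 \<le> l2" "0 \<le> r2"
  shows "(icov H l1 r1 l2 r2)\<^sup>2 \<le> icov H l1 r1 l1 r1 * icov H l2 r2 l2 r2"
proof -
  define A where "A = icov H l1 r1 l1 r1"
  define B where "B = icov H l1 r1 l2 r2"
  define C where "C = icov H l2 r2 l2 r2"
  have q: "0 \<le> x\<^sup>2 * A + 2 * x * y * B + y\<^sup>2 * C" for x y
  proof -
    have "0 \<le> (\<Sum>j\<in>UNIV. \<Sum>k\<in>UNIV. (if j then x else y) * (if k then x else y) *
       icov H (if j then l1 else l2) (if j then r1 else r2) (if k then l1 else l2) (if k then r1 else r2))"
      by (rule incr_psd[OF W]) (use nn in auto)
    thus ?thesis by (simp add: UNIV_bool A_def B_def C_def icov_sym power2_eq_square algebra_simps)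
  qed
  have A: "0 \<le> A" using q[of 1 0] by simp
  have C: "0 \<le> C" using q[of 0 1] by simp
  show ?thesis
  proof (cases "A = 0")
    case True
    have "B = 0"
    proof (rule ccontr)
      assume "B \<noteq> 0"
      have "0 \<le> 2 * (- (C + 1) / (2*B)) * 1 * B + 1\<^sup>2 * C" using q[of "- (C + 1) / (2*B)" 1] True by simp
      also have "\<dots> = -1" using \<open>B \<noteq> 0\<close> by (simp add: field_simps)
      finally show False by simp
    qed
    thus ?thesis using True by (simp add: A_def B_def C_def)
  next
    case False
    hence Ap: "A > 0" using A by simp
    have "0 \<le> (-B/A)\<^sup>2 * A + 2 * (-B/A) * 1 * B + 1\<^sup>2 * C" by (rule q)
    also have "\<dots> = C - B\<^sup>2 / A" using Ap by (simp add: field_simps power2_eq_square)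
    finally have "B\<^sup>2 / A \<le> C" by simp
    hence "B\<^sup>2 \<le> C * A" using Ap by (simp add: field_simps)
    thus ?thesis by (simp add: A_def B_def C_def mult.commute)
  qed
qed


lemma indep_ind_integral:
  assumes M: "prob_space M" and ind: "prob_space.indep_set M SW SU"
    and SWs: "sigma_algebra (space M) SW" and SUs: "sigma_algebra (space M) SU"
    and X: "X \<in> borel_measurable M" and XW: "\<And>B. B \<in> sets borel \<Longrightarrow> X -` B \<inter> space M \<in> SW"
    and A: "A \<in> SU" "A \<in> sets M" and Xi: "integrable M X"
  shows "(\<integral>\<omega>. indicator A \<omega> * X \<omega> \<partial>M) = measure M A * prob_space.expectation M X"
proof -
  interpret prob_space M by fact
  have sub1: "sigma_sets (space M) {indicator A -` B \<inter> space M | B. B \<in> sets (borel :: real measure)} \<subseteq> SU"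
  proof (rule sigma_algebra.sigma_sets_subset[OF SUs], safe)
    fix B :: "real set"
    have Asp: "A \<subseteq> space M" using A sets.sets_into_space by blast
    have e: "indicator A -` B \<inter> space M = (if 1\<in>B then A else {}) \<union> (if 0 \<in> B then space M - A else {})"
      using Asp by (auto simp: indicator_def of_bool_def split: if_splits)
    have "{} \<in> SU" "A \<in> SU" "space M - A \<in> SU"
      using A SUs by (auto simp: sigma_algebra_iff2)
    moreover have "\<And>a b. a \<in> SU \<Longrightarrow> b \<in> SU \<Longrightarrow> a \<union> b \<in> SU"
      by (rule ring_of_sets.Un[OF algebra.axioms(1)[OF sigma_algebra.axioms(1)[OF SUs]]])
    ultimately show "indicator A -` B \<inter> space M \<in> SU" unfolding e by (auto split: if_splits)
  qed
  have sub2: "sigma_sets (space M) {X -` B \<inter> space M | B. B \<in> sets (borel :: real measure)} \<subseteq> SW"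
    by (rule sigma_algebra.sigma_sets_subset[OF SWs]) (use XW in blast)
  have "indep_set SU SW" using ind unfolding indep_sets2_eq by (metis Int_commute mult.commute)
  hence "indep_set (sigma_sets (space M) {indicator A -` B \<inter> space M | B. B \<in> sets (borel :: real measure)})
         (sigma_sets (space M) {X -` B \<inter> space M | B. B \<in> sets (borel :: real measure)})"
    using sub1 sub2 by (simp add: indep_sets2_eq) blast
  hence iv: "indep_var borel (indicator A) borel X"
    using X A by (simp add: indep_var_eq)
  have "(\<integral>\<omega>. indicator A \<omega> * X \<omega> \<partial>M) = (\<integral>\<omega>. indicator A \<omega> \<partial>M) * expectation X"
    by (rule indep_var_lebesgue_integral[OF iv _ Xi]) (use A in \<open>simp add: integrable_indicator_iff less_top[symmetric]\<close>)
  thus ?thesis using A by simp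
qed


definition Rd :: "nat \<Rightarrow> (nat \<Rightarrow> nat) \<Rightarrow> nat \<Rightarrow> nat" where
  "Rd b u m = (\<Sum>i=1..m. u i * b ^ (i - 1))"

definition gW :: "real \<Rightarrow> nat \<Rightarrow> (real \<Rightarrow> 'a \<Rightarrow> real) \<Rightarrow> nat \<Rightarrow> (nat \<Rightarrow> nat) \<Rightarrow> 'a \<Rightarrow> real" where
  "gW \<alpha> b W n u \<omega> = (\<Sum>m=1..n. (1 / \<alpha> ^ m) *
      (W ((real (Rd b u m) + 1) / real b ^ m) \<omega> - W (real (Rd b u m) / real b ^ m) \<omega>))"

definition vvar :: "real \<Rightarrow> real \<Rightarrow> nat \<Rightarrow> nat \<Rightarrow> (nat \<Rightarrow> nat) \<Rightarrow> real" where
  "vvar H \<alpha> b n u = (\<Sum>m=1..n. \<Sum>m'=1..n. (1 / \<alpha> ^ m) * (1 / \<alpha> ^ m') *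
      icov H (real (Rd b u m) / real b ^ m) ((real (Rd b u m) + 1) / real b ^ m)
             (real (Rd b u m') / real b ^ m') ((real (Rd b u m') + 1) / real b ^ m'))"

lemma Rd_cong: "(\<And>i. i \<in> {1..m} \<Longrightarrow> u i = v i) \<Longrightarrow> Rd b u m = Rd b v m"
  unfolding Rd_def by (intro sum.cong) auto

lemma gW_gauss:
  assumes W: "is_fbm M H W"
  shows "gaussian_rv M (gW \<alpha> b W n u) 0 (vvar H \<alpha> b n u)"
proof -
  have "gaussian_rv M (\<lambda>\<omega>. \<Sum>j\<in>{1..n}. (1/\<alpha>^j) * (W ((real (Rd b u j) + 1) / real b ^ j) \<omega> - W (real (Rd b u j) / real b ^ j) \<omega>)) 0
     (\<Sum>j\<in>{1..n}. \<Sum>k\<in>{1..n}. (1/\<alpha>^j) * (1/\<alpha>^k) * icov H (real (Rd b u j) / real b ^ j) ((real (Rd b u j) + 1) / real b ^ j)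
             (real (Rd b u k) / real b ^ k) ((real (Rd b u k) + 1) / real b ^ k))"
    by (rule incr_gauss[OF W]) auto
  thus ?thesis unfolding gW_def[abs_def] vvar_def by simp
qed

lemma expectation_decomp:
  fixes M :: "'a measure" and H \<alpha> p :: real and b :: nat
    and W :: "real \<Rightarrow> 'a \<Rightarrow> real" and U :: "nat \<Rightarrow> 'a \<Rightarrow> nat"
    and G :: "nat \<Rightarrow> 'a \<Rightarrow> real"
  assumes "prob_space M"
    and b: "b \<ge> 2" and p: "0 < p"
    and W: "is_fbm M H W"
    and Um: "\<And>i. U i \<in> measurable M (count_space UNIV)"
    and Uind: "prob_space.indep_vars M (\<lambda>_. count_space UNIV) U {1..}"
    and Ud: "\<And>i. i \<ge> 1 \<Longrightarrow> distr M (count_space UNIV) (U i) = uniform_measure (count_space UNIV) {..<b}"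
    and ind: "prob_space.indep_set M (sigma_W M W) (sigma_U M U)"
    and Gdef: "\<And>n \<omega>. G n \<omega> = (\<Sum>m=1..n. (1 / \<alpha> ^ m) *
            (W ((real (digitsum b U m \<omega>) + 1) / real b ^ m) \<omega>
             - W (real (digitsum b U m \<omega>) / real b ^ m) \<omega>))"
  shows "prob_space.expectation M (\<lambda>\<omega>. \<bar>G n \<omega>\<bar> powr p) =
     (\<Sum>u\<in>PiE {1..n} (\<lambda>_. {..<b}). vvar H \<alpha> b n u powr (p/2)) * gmom p / real b ^ n"
proof -
  interpret prob_space M by fact
  note Um[measurable]
  have Wm[measurable]: "W t \<in> borel_measurable M" if "0 \<le> t" for t
  proof -
    have all: "\<forall>(S::real set) (c::real \<Rightarrow> real). finite S \<and> S \<subseteq> {0..} \<longrightarrow>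
        gaussian_rv M (\<lambda>\<omega>. \<Sum>t\<in>S. c t * W t \<omega>) 0
          (\<Sum>s\<in>S. \<Sum>t\<in>S. c s * c t * fbm_cov H s t)" using W unfolding is_fbm_def by blast
    have "gaussian_rv M (\<lambda>\<omega>. \<Sum>s\<in>{t}. (\<lambda>_. 1) s * W s \<omega>) 0 (\<Sum>s\<in>{t}. \<Sum>r\<in>{t}. (\<lambda>_. 1) s * (\<lambda>_. 1) r * fbm_cov H s r)"
      using all[rule_format, of "{t}" "\<lambda>_. 1"] that by simp
    thus ?thesis by (simp add: gaussian_rv_def)
  qed
  define P where "P = PiE {1..n} (\<lambda>_. {..<b})"
  define A where "A = (\<lambda>u. {\<omega>\<in>space M. \<forall>i\<in>{1..n}. U i \<omega> = u i})"
  define f where "f = (\<lambda>u \<omega>. \<bar>gW \<alpha> b W n u \<omega>\<bar> powr p)"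
  have finP: "finite P" unfolding P_def by (simp add: finite_PiE)
  define F1 where "F1 = (\<lambda>m \<omega>. W ((real (digitsum b U m \<omega>) + 1) / real b ^ m) \<omega>)"
  define F2 where "F2 = (\<lambda>m \<omega>. W (real (digitsum b U m \<omega>) / real b ^ m) \<omega>)"
  have m1[measurable]: "F1 m \<in> borel_measurable M" for m unfolding F1_def
    by (rule measurable_compose_countable[where f="\<lambda>k \<omega>. W ((real k + 1) / real b ^ m) \<omega>"])
       (auto simp: digitsum_def)
  have m2[measurable]: "F2 m \<in> borel_measurable M" for m unfolding F2_def
    by (rule measurable_compose_countable[where f="\<lambda>k \<omega>. W (real k / real b ^ m) \<omega>"])
       (auto simp: digitsum_def)
  have Geq: "G n = (\<lambda>\<omega>. \<Sum>m=1..n. (1 / \<alpha> ^ m) * (F1 m \<omega> - F2 m \<omega>))"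
    by (rule ext) (simp add: Gdef F1_def F2_def)
  have Gm: "(\<lambda>\<omega>. \<bar>G n \<omega>\<bar> powr p) \<in> borel_measurable M"
    unfolding Geq by measurable
  define gensW where "gensW = (\<Union>t\<in>{0..}. {W t -` A \<inter> space M | A. A \<in> sets (borel :: real measure)})"
  define gensU where "gensU = (\<Union>i\<in>{1..}. {U i -` A \<inter> space M | A. A \<in> (UNIV :: nat set set)})"
  have gW_sub: "gensW \<subseteq> Pow (space M)" "gensU \<subseteq> Pow (space M)" unfolding gensW_def gensU_def by auto
  define NW where "NW = sigma (space M) gensW"
  have sNW: "sets NW = sigma_W M W" "space NW = space M"
    unfolding NW_def sigma_W_def gensW_def using gW_sub by (auto simp: gensW_def)
  have sigW: "sigma_algebra (space M) (sigma_W M W)" unfolding sigma_W_def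
    by (rule sigma_algebra_sigma_sets) (use gW_sub in \<open>auto simp: gensW_def\<close>)
  have sigU: "sigma_algebra (space M) (sigma_U M U)" unfolding sigma_U_def
    by (rule sigma_algebra_sigma_sets) (use gW_sub in \<open>auto simp: gensU_def\<close>)
  have WNm[measurable]: "W t \<in> borel_measurable NW" if "0 \<le> t" for t
  proof (rule measurableI)
    fix B :: "real set" assume "B \<in> sets borel"
    hence "W t -` B \<inter> space M \<in> gensW" using that unfolding gensW_def by auto
    thus "W t -` B \<inter> space NW \<in> sets NW" unfolding NW_def using gW_sub by (auto simp: sNW)
  qed auto
  have fNm: "f u \<in> borel_measurable NW" for u
  proof -
    define E1 where "E1 = (\<lambda>m. W ((real (Rd b u m) + 1) / real b ^ m))"
    define E2 where "E2 = (\<lambda>m. W (real (Rd b u m) / real b ^ m))"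
    have [measurable]: "E1 m \<in> borel_measurable NW" "E2 m \<in> borel_measurable NW" for m
      unfolding E1_def E2_def by (auto intro!: WNm)
    have "f u = (\<lambda>\<omega>. \<bar>\<Sum>m=1..n. (1 / \<alpha> ^ m) * (E1 m \<omega> - E2 m \<omega>)\<bar> powr p)"
      by (simp add: f_def gW_def[abs_def] E1_def E2_def)
    thus ?thesis by simp
  qed
  have fW: "f u -` B \<inter> space M \<in> sigma_W M W" if "B \<in> sets borel" for u B
    using measurable_sets[OF fNm that] by (simp add: sNW)
  have fM: "f u \<in> borel_measurable M" for u
  proof -
    define E1 where "E1 = (\<lambda>m. W ((real (Rd b u m) + 1) / real b ^ m))"
    define E2 where "E2 = (\<lambda>m. W (real (Rd b u m) / real b ^ m))"
    have [measurable]: "E1 m \<in> borel_measurable M" "E2 m \<in> borel_measurable M" for m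
      unfolding E1_def E2_def by (auto intro!: Wm)
    have "f u = (\<lambda>\<omega>. \<bar>\<Sum>m=1..n. (1 / \<alpha> ^ m) * (E1 m \<omega> - E2 m \<omega>)\<bar> powr p)"
      by (simp add: f_def gW_def[abs_def] E1_def E2_def)
    thus ?thesis by simp
  qed
  have fint: "integrable M (f u)" and fexp: "expectation (f u) = vvar H \<alpha> b n u powr (p/2) * gmom p" for u
    using gaussian_abs_moment[OF \<open>prob_space M\<close> p gW_gauss[OF W]] unfolding f_def by auto
  have AU: "A u \<in> sigma_U M U" for u
  proof -
    have Ui: "U i -` {u i} \<inter> space M \<in> sigma_U M U" if "i \<in> {1..n}" for i
      unfolding sigma_U_def using that by (intro sigma_sets.Basic) auto
    show ?thesis
    proof (cases "n = 0")
      case True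
      hence "A u = space M" by (simp add: A_def)
      thus ?thesis using sigU by (simp add: sigma_algebra_iff2) (metis Diff_empty)
    next
      case False
      hence "A u = (\<Inter>i\<in>{1..n}. U i -` {u i} \<inter> space M)" by (auto simp: A_def)
      also have "\<dots> \<in> sigma_U M U"
      proof -
        interpret sU: sigma_algebra "space M" "sigma_U M U" by (rule sigU)
        show ?thesis by (rule sU.finite_INT) (use False Ui in auto)
      qed
      finally show ?thesis .
    qed
  qed
  have AM: "A u \<in> sets M" for u
  proof (cases "n = 0")
    case True thus ?thesis by (simp add: A_def)
  next
    case False
    hence "A u = (\<Inter>i\<in>{1..n}. U i -` {u i} \<inter> space M)" by (auto simp: A_def)
    also have "\<dots> \<in> sets M" using False by (intro sets.finite_INT) (auto intro!: measurable_sets[OF Um])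
    finally show ?thesis .
  qed
  have probA: "prob (A u) = 1 / real b ^ n" if "u \<in> P" for u
  proof -
    have pi: "prob (U i -` {u i} \<inter> space M) = 1 / real b" if "i \<in> {1..n}" for i
    proof -
      have ub: "u i < b" using \<open>u \<in> P\<close> that by (auto simp: P_def)
      have "prob (U i -` {u i} \<inter> space M) = measure (distr M (count_space UNIV) (U i)) {u i}"
        by (simp add: measure_distr)
      also have "\<dots> = measure (uniform_measure (count_space UNIV) {..<b}) {u i}"
        using that Ud by simp
      also have "\<dots> = 1 / real b" using ub
        by (simp add: measure_def emeasure_uniform_measure divide_ennreal[symmetric] ennreal_of_nat_eq_real_of_nat)
      finally show ?thesis .
    qed
    show ?thesis
    proof (cases "n = 0")
      case True thus ?thesis by (simp add: A_def prob_space)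
    next
      case False
      have ids: "indep_sets (\<lambda>i. {U i -` B \<inter> space M | B. B \<in> sets (count_space UNIV)}) {1..}"
        using Uind unfolding indep_vars_def2 by auto
      have "A u = (\<Inter>i\<in>{1..n}. U i -` {u i} \<inter> space M)" using False by (auto simp: A_def)
      hence "prob (A u) = (\<Prod>i\<in>{1..n}. prob (U i -` {u i} \<inter> space M))"
        using indep_setsD[OF ids, of "{1..n}" "\<lambda>i. U i -` {u i} \<inter> space M"] False by auto
      also have "\<dots> = (\<Prod>i\<in>{1..n}. 1 / real b)" by (intro prod.cong) (auto simp: pi)
      finally show ?thesis by (simp add: power_one_over)
    qed
  qed
  have AEi: "AE \<omega> in M. U i \<omega> < b" if "i \<ge> 1" for i
  proof -
    have "AE x in distr M (count_space UNIV) (U i). x < b"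
      unfolding Ud[OF that] by (rule AE_uniform_measureI) auto
    thus ?thesis by (subst (asm) AE_distr_iff) auto
  qed
  have AEall: "AE \<omega> in M. \<forall>i\<in>{1..n}. U i \<omega> < b"
    using AEi by (subst AE_finite_all) auto
  have AEeq: "AE \<omega> in M. \<bar>G n \<omega>\<bar> powr p = (\<Sum>u\<in>P. indicator (A u) \<omega> * f u \<omega>)"
    using AEall AE_space
  proof (eventually_elim)
    case (elim \<omega>)
    show ?case
    proof -
      have True: "\<omega> \<in> space M" using elim by simp
      define u0 where "u0 = restrict (\<lambda>i. U i \<omega>) {1..n}"
      have u0P: "u0 \<in> P" using elim by (auto simp: P_def u0_def)
      have inA: "\<omega> \<in> A u0" using True by (auto simp: A_def u0_def)
      have notA: "\<omega> \<notin> A u" if "u \<in> P" "u \<noteq> u0" for u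
      proof
        assume "\<omega> \<in> A u"
        hence "\<forall>i\<in>{1..n}. u i = u0 i" by (auto simp: A_def u0_def)
        moreover have "\<forall>i. i \<notin> {1..n} \<longrightarrow> u i = u0 i" using that u0P by (auto simp: P_def PiE_def extensional_def)
        ultimately show False using that by (metis ext)
      qed
      have "(\<Sum>u\<in>P. indicator (A u) \<omega> * f u \<omega>) = indicator (A u0) \<omega> * f u0 \<omega>"
        by (rule sum.remove[OF finP u0P, THEN trans]) (auto intro!: sum.neutral simp: notA)
      also have "\<dots> = f u0 \<omega>" using inA by simp
      also have "f u0 \<omega> = \<bar>G n \<omega>\<bar> powr p"
      proof -
        have "digitsum b U m \<omega> = Rd b u0 m" if "m \<in> {1..n}" for m
          unfolding digitsum_def Rd_def using that by (intro sum.cong) (auto simp: u0_def)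
        thus ?thesis unfolding f_def gW_def Gdef by (intro arg_cong2[where f="(powr)"] arg_cong[where f=abs] sum.cong) auto
      qed
      finally show ?thesis by simp
    qed
  qed
  have "expectation (\<lambda>\<omega>. \<bar>G n \<omega>\<bar> powr p) = expectation (\<lambda>\<omega>. \<Sum>u\<in>P. indicator (A u) \<omega> * f u \<omega>)"
    by (rule integral_cong_AE[OF Gm _ AEeq]) (use AM fM in \<open>auto intro!: borel_measurable_sum borel_measurable_times\<close>)
  also have "\<dots> = (\<Sum>u\<in>P. expectation (\<lambda>\<omega>. indicator (A u) \<omega> * f u \<omega>))"
    by (rule Bochner_Integration.integral_sum) (use integrable_mult_indicator[OF AM fint] in simp)
  also have "\<dots> = (\<Sum>u\<in>P. prob (A u) * expectation (f u))"
    by (intro sum.cong refl indep_ind_integral[OF \<open>prob_space M\<close> ind sigW sigU fM fW AU AM fint])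
  also have "\<dots> = (\<Sum>u\<in>P. vvar H \<alpha> b n u powr (p/2)) * gmom p / real b ^ n"
    by (simp add: probA fexp sum_distrib_right sum_divide_distrib cong: sum.cong)
  finally show ?thesis by (simp add: P_def)
qed


lemma far_bound:
  fixes H a h D x y :: real
  assumes H: "0 < H" "H < 1" and a: "0 < a" and h: "0 < h" and D: "0 < D" and far: "y \<ge> x + a + D"
  shows "\<bar>icov H x (x+a) y (y+h)\<bar> \<le> H * \<bar>2*H - 1\<bar> * a * h * D powr (2*H - 2)"
proof -
  define c where "c = 2*H"
  define \<phi> where "\<phi> = (\<lambda>t::real. t powr c)"
  define z where "z = y - x - a"
  have z: "z \<ge> D" using far by (simp add: z_def)
  have zp: "z > 0" using z D by simp
  have "icov H x (x+a) y (y+h) = (\<phi> (z+a+h) - \<phi> (z+a) - \<phi> (z+h) + \<phi> z) / 2"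
    using zp a h unfolding icov_def fbm_cov_def \<phi>_def c_def z_def
    by (simp add: abs_minus_commute field_simps)
  define g where "g = (\<lambda>t. \<phi> (t + h) - \<phi> t)"
  define g' where "g' = (\<lambda>t. c * (t + h) powr (c - 1) - c * t powr (c - 1))"
  have dg: "DERIV g t :> g' t" if "z \<le> t" for t
  proof -
    have tp: "t > 0" using that zp by simp
    have "DERIV \<phi> (t+h) :> c * (t+h) powr (c-1)" unfolding \<phi>_def
      using has_real_derivative_powr[of "t+h" c] tp h by simp
    hence d1: "DERIV (\<lambda>t. \<phi> (t+h)) t :> c * (t+h) powr (c-1)"
      using DERIV_shift[of \<phi> _ t h] by simp
    have d2: "DERIV \<phi> t :> c * t powr (c-1)" unfolding \<phi>_def
      using has_real_derivative_powr[of t c] tp by simp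
    show ?thesis unfolding g_def g'_def using DERIV_diff[OF d1 d2] by simp
  qed
  obtain \<xi> where \<xi>: "z < \<xi>" "\<xi> < z + a" "g (z+a) - g z = (z + a - z) * g' \<xi>"
    using MVT2[of z "z+a" g g'] a dg by auto
  define k where "k = (\<lambda>t. c * t powr (c-1))"
  define k' where "k' = (\<lambda>t. c * ((c-1) * t powr (c-2)))"
  have dk: "DERIV k t :> k' t" if "\<xi> \<le> t" for t
  proof -
    have tp: "t > 0" using that \<xi> zp by simp
    show ?thesis unfolding k_def k'_def
      using DERIV_cmult[OF has_real_derivative_powr[of t "c-1"], of c] tp by (simp add: algebra_simps)
  qed
  obtain \<eta> where \<eta>: "\<xi> < \<eta>" "\<eta> < \<xi> + h" "k (\<xi>+h) - k \<xi> = (\<xi> + h - \<xi>) * k' \<eta>"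
    using MVT2[of \<xi> "\<xi>+h" k k'] h dk by auto
  have g'k: "g' \<xi> = k (\<xi>+h) - k \<xi>" by (simp add: g'_def k_def)
  have etaD: "\<eta> \<ge> D" using \<eta> \<xi> z by simp
  have bnd: "\<bar>k' \<eta>\<bar> \<le> c * \<bar>c - 1\<bar> * D powr (c - 2)"
  proof -
    have "\<eta> powr (c - 2) \<le> D powr (c - 2)"
      using etaD D H by (intro powr_mono2') (auto simp: c_def)
    hence "\<bar>c - 1\<bar> * \<eta> powr (c - 2) \<le> \<bar>c - 1\<bar> * D powr (c - 2)" by (intro mult_left_mono) auto
    thus ?thesis using H by (simp add: k'_def abs_mult c_def)
  qed
  have "\<phi> (z+a+h) - \<phi> (z+a) - \<phi> (z+h) + \<phi> z = g (z+a) - g z" by (simp add: g_def add.commute add.left_commute)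
  also have "\<dots> = a * (h * k' \<eta>)" using \<xi> \<eta> g'k by simp
  finally have "icov H x (x+a) y (y+h) = a * h * k' \<eta> / 2"
    using \<open>icov H x (x+a) y (y+h) = _\<close> by simp
  hence "\<bar>icov H x (x+a) y (y+h)\<bar> = \<bar>a * h * k' \<eta> / 2\<bar>" by simp
  hence "\<bar>icov H x (x+a) y (y+h)\<bar> = a * h * \<bar>k' \<eta>\<bar> / 2"
    using a h by (simp add: abs_mult abs_divide)
  also have "\<dots> \<le> a * h * (c * \<bar>c - 1\<bar> * D powr (c - 2)) / 2"
    using bnd a h by (intro divide_right_mono mult_left_mono) auto
  also have "\<dots> = H * \<bar>2*H - 1\<bar> * a * h * D powr (2*H - 2)" by (simp add: c_def)
  finally show ?thesis .
qed


lemma sum_group: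
  fixes f :: "nat \<Rightarrow> real"
  shows "(\<Sum>N<K*c. f N) = (\<Sum>M<K. \<Sum>r<c. f (M*c + r))"
proof -
  have "(\<Sum>N<K*c. f N) = (\<Sum>M<K. sum f {M*c..<M*c+c})" by (rule sum.nat_group[symmetric])
  also have "\<dots> = (\<Sum>M<K. \<Sum>r<c. f (M*c + r))"
  proof (rule sum.cong[OF refl])
    fix M
    have "sum f {0 + M*c..<c + M*c} = (\<Sum>r\<in>{0..<c}. f (r + M*c))" by (rule sum.shift_bounds_nat_ivl)
    thus "sum f {M*c..<M*c+c} = (\<Sum>r<c. f (M*c + r))" by (simp add: add.commute lessThan_atLeast0)
  qed
  finally show ?thesis .
qed

lemma card_window:
  fixes t lo L :: real
  assumes t: "t > 0" and L: "L \<ge> 0" and S: "finite S"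
    and win: "\<And>r. r \<in> S \<Longrightarrow> lo < real r * t \<and> real r * t < lo + L"
  shows "real (card S) \<le> L / t + 1"
proof (cases "S = {}")
  case True thus ?thesis using L t by simp
next
  case False
  define r1 where "r1 = Min S"
  define r2 where "r2 = Max S"
  have r1: "r1 \<in> S" "r2 \<in> S" using S False by (auto simp: r1_def r2_def)
  have sub: "S \<subseteq> {r1..r2}" using S by (auto simp: r1_def r2_def)
  have "card S \<le> card {r1..r2}" by (rule card_mono) (use sub in auto)
  hence c: "real (card S) \<le> real r2 + 1 - real r1" using r1 sub by auto
  have "real r2 * t < lo + L" "lo < real r1 * t" using win r1 by auto
  hence "(real r2 - real r1) * t < L" by (simp add: algebra_simps)
  hence "real r2 - real r1 < L / t" using t by (simp add: field_simps)
  thus ?thesis using c by simp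
qed

definition pos :: "nat \<Rightarrow> nat \<Rightarrow> nat \<Rightarrow> real" where
  "pos b m N = real (N mod b ^ m) / real b ^ m"

definition close :: "nat \<Rightarrow> nat \<Rightarrow> nat \<Rightarrow> real \<Rightarrow> nat \<Rightarrow> bool" where
  "close b m m' D N \<longleftrightarrow> pos b m' N < pos b m N + 1 / real b ^ m + D \<and>
                         pos b m N < pos b m' N + 1 / real b ^ m' + D"

lemma count_close:
  assumes b: "b \<ge> 2" and mm: "m < m'" "m' \<le> n" and D: "D > 0"
  shows "(\<Sum>N<b^n. if close b m m' D N then 1 else 0) \<le> real b ^ n * (4 / real b ^ m + 4 * D)"
proof -
  define d where "d = m' - m"
  have d: "d \<ge> 1" "m' = m + d" using mm by (auto simp: d_def)
  define a where "a = 1 / real b ^ m"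
  define h where "h = 1 / real b ^ m'"
  have bpos: "real b > 0" using b by simp
  have ap: "a > 0" and hp: "h > 0" using bpos by (auto simp: a_def h_def)
  have bd: "real b ^ d \<ge> 2" using b d(1)
    by (metis le_trans numeral_le_real_of_nat_iff of_nat_power power_increasing power_one_right one_le_numeral nat_le_real_less not_less)
  have ha: "h = a / real b ^ d" by (simp add: h_def a_def d power_add)
  have h2: "h \<le> a / 2" unfolding ha using ap bd b by (intro divide_left_mono) auto
  have nm: "b ^ n = b ^ (n - m) * b ^ m" using mm by (simp flip: power_add)
  let ?F = "\<lambda>N. if close b m m' D N then 1 else (0::real)"
  have "(\<Sum>N<b^n. ?F N) = (\<Sum>M<b^(n-m). \<Sum>r<b^m. ?F (M * b^m + r))"
    unfolding nm by (rule sum_group)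
  also have "\<dots> \<le> (\<Sum>M<b^(n-m). 4 + 4 * D / a)"
  proof (rule sum_mono)
    fix M assume "M \<in> {..<b^(n-m)}"
    define Q where "Q = M mod b ^ d"
    define lo where "lo = real Q / real b ^ d - a - D"
    define S where "S = {r \<in> {..<b^m}. close b m m' D (M * b^m + r)}"
    have sumS: "(\<Sum>r<b^m. ?F (M * b^m + r)) = real (card S)"
      unfolding S_def by (simp add: sum.If_cases Int_def)
    have modm: "(M * b^m + r) mod b^m = r" if "r < b^m" for r using that by simp
    have modm': "(M * b^m + r) mod b^m' = r + b^m * Q" if "r < b^m" for r
    proof -
      have "(M * b^m + r) mod (b^m * b^d) = b^m * ((M * b^m + r) div b^m mod b^d) + (M * b^m + r) mod b^m"
        by (rule mod_mult2_eq)
      also have "(M * b^m + r) div b^m = M" using that b by simp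
      finally show ?thesis using that by (simp add: d(2) power_add Q_def)
    qed
    have win: "lo < real r * (a - h) \<and> real r * (a - h) < lo + (a + h + 2 * D)" if "r \<in> S" for r
    proof -
      have r: "r < b^m" and cl: "close b m m' D (M * b^m + r)" using that by (auto simp: S_def)
      have x: "pos b m (M * b^m + r) = real r * a" using modm[OF r] by (simp add: pos_def a_def)
      have y: "pos b m' (M * b^m + r) = real r * h + real Q / real b ^ d"
        using modm'[OF r] bpos by (simp add: pos_def h_def d(2) power_add field_simps)
      show ?thesis using cl unfolding close_def x y lo_def a_def[symmetric] h_def[symmetric]
        by (auto simp: algebra_simps)
    qed
    have "real (card S) \<le> (a + h + 2 * D) / (a - h) + 1"
      by (rule card_window[OF _ _ _ win]) (use h2 ap hp D in \<open>auto simp: S_def\<close>)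
    also have "(a + h + 2 * D) / (a - h) \<le> 3 + 4 * D / a"
    proof -
      have amh: "a - h \<ge> a / 2" using h2 by simp
      have "(a + h + 2 * D) / (a - h) \<le> (a + h + 2 * D) / (a / 2)"
        using amh ap hp D by (intro divide_left_mono) auto
      also have "\<dots> = 2 + 2 * h / a + 4 * D / a" using ap by (simp add: field_simps)
      also have "2 * h / a \<le> 1" using h2 ap by (simp add: field_simps)
      finally show ?thesis by simp
    qed
    finally show "(\<Sum>r<b^m. ?F (M * b^m + r)) \<le> 4 + 4 * D / a" using sumS by simp
  qed
  also have "\<dots> = real b ^ n * (4 / real b ^ m + 4 * D)"
  proof -
    have e: "real b ^ m * real b ^ (n - m) = real b ^ n" using mm by (simp flip: power_add)
    show ?thesis using bpos unfolding a_def nm by (simp add: field_simps e)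
  qed
  finally show ?thesis .
qed


definition rho :: "real \<Rightarrow> nat \<Rightarrow> nat \<Rightarrow> nat \<Rightarrow> nat \<Rightarrow> real" where
  "rho H b m m' N = (real b powr H) ^ m * (real b powr H) ^ m' *
     icov H (pos b m N) (pos b m N + 1 / real b ^ m) (pos b m' N) (pos b m' N + 1 / real b ^ m')"

lemma rho_sym: "rho H b m' m N = rho H b m m' N"
  unfolding rho_def by (simp add: icov_sym mult.commute)

lemma pos_nonneg: "0 \<le> pos b m N" by (simp add: pos_def)

lemma rho_le1:
  assumes W: "is_fbm M H W" and b: "b \<ge> 2" and H: "0 < H"
  shows "\<bar>rho H b m m' N\<bar> \<le> 1"
proof -
  define x where "x = pos b m N"
  define y where "y = pos b m' N"
  define a where "a = 1 / real b ^ m"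
  define h where "h = 1 / real b ^ m'"
  have ap: "a > 0" "h > 0" using b by (auto simp: a_def h_def)
  have cs: "(icov H x (x+a) y (y+h))\<^sup>2 \<le> icov H x (x+a) x (x+a) * icov H y (y+h) y (y+h)"
    by (rule icov_cs[OF W]) (use ap in \<open>auto simp: x_def y_def pos_nonneg\<close>)
  have s1: "icov H x (x+a) x (x+a) = a powr (2*H)" using ap by (simp add: icov_self)
  have s2: "icov H y (y+h) y (y+h) = h powr (2*H)" using ap by (simp add: icov_self)
  have "\<bar>icov H x (x+a) y (y+h)\<bar> \<le> sqrt (a powr (2*H) * h powr (2*H))"
  proof -
    have "\<bar>icov H x (x+a) y (y+h)\<bar> = sqrt ((icov H x (x+a) y (y+h))\<^sup>2)" by simp
    also have "\<dots> \<le> sqrt (a powr (2*H) * h powr (2*H))" using cs s1 s2 by (intro real_sqrt_le_mono) simp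
    finally show ?thesis .
  qed
  also have "\<dots> = a powr H * h powr H" using ap
    by (simp add: real_sqrt_mult powr_half_sqrt[symmetric] powr_powr)
  finally have ic: "\<bar>icov H x (x+a) y (y+h)\<bar> \<le> a powr H * h powr H" .
  have e1: "(real b powr H) ^ m * a powr H = 1"
    using b by (simp add: a_def powr_divide powr_realpow[symmetric] powr_powr powr_power mult.commute)
  have e2: "(real b powr H) ^ m' * h powr H = 1"
    using b by (simp add: h_def powr_divide powr_realpow[symmetric] powr_powr powr_power mult.commute)
  have "\<bar>rho H b m m' N\<bar> = (real b powr H) ^ m * (real b powr H) ^ m' * \<bar>icov H x (x+a) y (y+h)\<bar>"
    by (simp add: rho_def x_def y_def a_def h_def abs_mult)
  also have "\<dots> \<le> (real b powr H) ^ m * (real b powr H) ^ m' * (a powr H * h powr H)"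
    by (intro mult_left_mono ic) auto
  also have "\<dots> = ((real b powr H) ^ m * a powr H) * ((real b powr H) ^ m' * h powr H)" by (simp add: ac_simps)
  also have "\<dots> = 1" by (simp add: e1 e2)
  finally show ?thesis .
qed


lemma rho_far:
  assumes H: "0 < H" "H < 1" and b: "b \<ge> 2" and nc: "\<not> close b m m' (real b powr (- real m / 2)) N"
  shows "\<bar>rho H b m m' N\<bar> \<le> H * \<bar>2*H - 1\<bar> * real b powr (- (1 - H) * real m')"
proof -
  define D where "D = real b powr (- real m / 2)"
  define x where "x = pos b m N"
  define y where "y = pos b m' N"
  define a where "a = 1 / real b ^ m"
  define h where "h = 1 / real b ^ m'"
  define K where "K = H * \<bar>2*H - 1\<bar>"
  have bp: "real b > 0" using b by simp
  have ap: "a > 0" "h > 0" "D > 0" using b by (auto simp: a_def h_def D_def)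
  have far: "y \<ge> x + a + D \<or> x \<ge> y + h + D" using nc unfolding close_def D_def[symmetric]
    by (auto simp: x_def y_def a_def h_def)
  have ic: "\<bar>icov H x (x+a) y (y+h)\<bar> \<le> K * a * h * D powr (2*H - 2)"
  proof (cases "y \<ge> x + a + D")
    case True thus ?thesis using far_bound[OF H ap(1) ap(2) ap(3) True] by (simp add: K_def)
  next
    case False
    hence "x \<ge> y + h + D" using far by simp
    from far_bound[OF H ap(2) ap(1) ap(3) this] show ?thesis by (simp add: K_def icov_sym mult_ac)
  qed
  have gen: "(real b powr H) ^ k * (1 / real b ^ k) = real b powr (- (1 - H) * real k)" for k
  proof -
    have "(real b powr H) ^ k = real b powr (real k * H)" using bp by (simp add: powr_power)
    moreover have "1 / real b ^ k = real b powr (- real k)"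
      using bp by (simp add: powr_minus_divide powr_realpow)
    ultimately show ?thesis by (simp flip: powr_add add: algebra_simps)
  qed
  have ea: "(real b powr H) ^ m * a = real b powr (- (1 - H) * real m)" unfolding a_def by (rule gen)
  have eh: "(real b powr H) ^ m' * h = real b powr (- (1 - H) * real m')" unfolding h_def by (rule gen)
  have eD: "D powr (2*H - 2) = real b powr ((1 - H) * real m)"
    using bp by (simp add: D_def powr_powr algebra_simps)
  have "\<bar>rho H b m m' N\<bar> = (real b powr H) ^ m * (real b powr H) ^ m' * \<bar>icov H x (x+a) y (y+h)\<bar>"
    by (simp add: rho_def x_def y_def a_def h_def abs_mult)
  also have "\<dots> \<le> (real b powr H) ^ m * (real b powr H) ^ m' * (K * a * h * D powr (2*H - 2))"
    by (intro mult_left_mono ic) auto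
  also have "\<dots> = K * (((real b powr H) ^ m * a) * D powr (2*H - 2)) * ((real b powr H) ^ m' * h)"
    by (simp add: ac_simps)
  also have "((real b powr H) ^ m * a) * D powr (2*H - 2) = 1"
  proof -
    have "(H - 1) * real m + (1 - H) * real m = 0" by (simp add: algebra_simps)
    thus ?thesis unfolding ea eD using bp by (simp flip: powr_add)
  qed
  finally show ?thesis by (simp add: eh K_def)
qed

lemma rho_avg:
  assumes W: "is_fbm M H W" and H: "0 < H" "H < 1" and b: "b \<ge> 2" and mm: "m < m'" "m' \<le> n"
  shows "(\<Sum>N<b^n. \<bar>rho H b m m' N\<bar>) \<le>
    real b ^ n * (H * \<bar>2*H - 1\<bar> * real b powr (- (1 - H) * real m') + 4 / real b ^ m + 4 * real b powr (- real m / 2))"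
proof -
  define D where "D = real b powr (- real m / 2)"
  define K where "K = H * \<bar>2*H - 1\<bar> * real b powr (- (1 - H) * real m')"
  have Dp: "D > 0" using b by (simp add: D_def)
  have pt: "\<bar>rho H b m m' N\<bar> \<le> K + (if close b m m' D N then 1 else 0)" for N
  proof (cases "close b m m' D N")
    case True
    have "K \<ge> 0" using H by (simp add: K_def)
    thus ?thesis using True rho_le1[OF W b H(1), of m m' N] by simp
  next
    case False thus ?thesis using rho_far[OF H b, of m m' N] by (simp add: K_def D_def)
  qed
  have "(\<Sum>N<b^n. \<bar>rho H b m m' N\<bar>) \<le> (\<Sum>N<b^n. K + (if close b m m' D N then 1 else 0))"
    by (intro sum_mono pt)
  also have "\<dots> = real b ^ n * K + (\<Sum>N<b^n. if close b m m' D N then 1 else 0)"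
    by (simp add: sum.distrib)
  also have "\<dots> \<le> real b ^ n * K + real b ^ n * (4 / real b ^ m + 4 * D)"
    using count_close[OF b mm Dp] by simp
  finally show ?thesis by (simp add: K_def D_def algebra_simps)
qed


lemma powr_unif:
  fixes r Bd e :: real assumes r: "r > 0" and e: "e > 0"
  shows "\<exists>\<delta>>0. \<forall>x\<in>{0..Bd}. \<forall>y\<in>{0..Bd}. \<bar>x - y\<bar> < \<delta> \<longrightarrow> \<bar>x powr r - y powr r\<bar> < e"
proof -
  have "continuous_on {0..Bd} (\<lambda>x::real. x powr r)"
    using r by (intro continuous_on_powr') (auto intro: continuous_intros)
  hence "uniformly_continuous_on {0..Bd} (\<lambda>x::real. x powr r)"
    by (rule compact_uniformly_continuous) simp
  then obtain \<delta> where "\<delta> > 0" "\<forall>x\<in>{0..Bd}. \<forall>y\<in>{0..Bd}. dist y x < \<delta> \<longrightarrow> dist (y powr r) (x powr r) < e"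
    using e unfolding uniformly_continuous_on_def by metis
  thus ?thesis by (auto simp: dist_real_def abs_minus_commute)
qed

lemma avg_powr_conv:
  fixes w :: "nat \<Rightarrow> 'b \<Rightarrow> real" and D :: "nat \<Rightarrow> real" and c :: "nat \<Rightarrow> real"
  assumes r: "r > 0" and Bd: "Bd \<ge> 0"
    and wb: "\<And>n N. N \<in> F n \<Longrightarrow> 0 \<le> w n N \<and> w n N \<le> Bd"
    and Db: "\<And>n. 0 \<le> D n \<and> D n \<le> Bd"
    and c: "\<And>n. c n \<ge> 0" and cF: "\<And>n. c n * real (card (F n)) = 1"
    and E: "(\<lambda>n. c n * (\<Sum>N\<in>F n. \<bar>w n N - D n\<bar>)) \<longlonglongrightarrow> 0"
    and DS: "D \<longlonglongrightarrow> S" and S: "S > 0"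
  shows "(\<lambda>n. c n * (\<Sum>N\<in>F n. w n N powr r)) \<longlonglongrightarrow> S powr r"
proof -
  have fin: "finite (F n)" for n
    using cF[of n] by (cases "finite (F n)") auto
  have dif: "(\<lambda>n. c n * (\<Sum>N\<in>F n. w n N powr r) - D n powr r) \<longlonglongrightarrow> 0"
  proof (rule LIMSEQ_I)
    fix e :: real assume e: "e > 0"
    obtain \<delta> where \<delta>: "\<delta> > 0" "\<forall>x\<in>{0..Bd}. \<forall>y\<in>{0..Bd}. \<bar>x - y\<bar> < \<delta> \<longrightarrow> \<bar>x powr r - y powr r\<bar> < e/2"
      using powr_unif[OF r, of "e/2" Bd] e by auto
    define K where "K = 2 * Bd powr r / \<delta>"
    have K: "K \<ge> 0" using \<delta> by (simp add: K_def)
    have pt: "\<bar>w n N powr r - D n powr r\<bar> \<le> e/2 + K * \<bar>w n N - D n\<bar>" if "N \<in> F n" for n N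
    proof (cases "\<bar>w n N - D n\<bar> < \<delta>")
      case True
      hence "\<bar>w n N powr r - D n powr r\<bar> < e/2" using \<delta>(2) wb[OF that] Db[of n] by auto
      moreover have "0 \<le> K * \<bar>w n N - D n\<bar>" using K by simp
      ultimately show ?thesis by simp
    next
      case False
      have a1: "w n N powr r \<le> Bd powr r" "D n powr r \<le> Bd powr r"
        using wb[OF that] Db[of n] r by (auto intro: powr_mono2)
      have "\<bar>w n N powr r - D n powr r\<bar> \<le> 2 * Bd powr r"
        unfolding abs_le_iff using a1 powr_ge_zero[of "w n N" r] powr_ge_zero[of "D n" r] by linarith
      also have "\<dots> = K * \<delta>" using \<delta> by (simp add: K_def)
      also have "\<dots> \<le> K * \<bar>w n N - D n\<bar>" using False K by (intro mult_left_mono) auto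
      finally show ?thesis using e by simp
    qed
    obtain no where no: "\<forall>n\<ge>no. norm (c n * (\<Sum>N\<in>F n. \<bar>w n N - D n\<bar>) - 0) < e / (2 * (K + 1))"
      using LIMSEQ_D[OF E, of "e / (2 * (K + 1))"] e K by auto
    show "\<exists>no. \<forall>n\<ge>no. norm (c n * (\<Sum>N\<in>F n. w n N powr r) - D n powr r - 0) < e"
    proof (intro exI allI impI)
      fix n assume "n \<ge> no"
      hence En: "c n * (\<Sum>N\<in>F n. \<bar>w n N - D n\<bar>) < e / (2 * (K + 1))" using no c[of n]
        by (auto simp: abs_mult)
      have "c n * (\<Sum>N\<in>F n. w n N powr r) - D n powr r = c n * (\<Sum>N\<in>F n. w n N powr r - D n powr r)"
        using cF[of n] by (simp add: sum_subtractf right_diff_distrib mult.assoc[symmetric])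
      hence "\<bar>c n * (\<Sum>N\<in>F n. w n N powr r) - D n powr r\<bar> \<le> c n * (\<Sum>N\<in>F n. \<bar>w n N powr r - D n powr r\<bar>)"
        using c[of n] by (simp add: abs_mult) (intro mult_left_mono sum_abs, use c in auto)
      also have "\<dots> \<le> c n * (\<Sum>N\<in>F n. e/2 + K * \<bar>w n N - D n\<bar>)"
        using c[of n] pt by (intro mult_left_mono sum_mono) auto
      also have "\<dots> = e/2 + K * (c n * (\<Sum>N\<in>F n. \<bar>w n N - D n\<bar>))"
        using cF[of n] by (simp add: sum.distrib sum_distrib_left[symmetric] algebra_simps)
      also have "\<dots> \<le> e/2 + K * (e / (2 * (K + 1)))" using En K by (intro add_left_mono mult_left_mono) auto
      also have "\<dots> < e"
      proof -
        have "K * (e / (2 * (K + 1))) < e / 2" using K e by (simp add: field_simps)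
        thus ?thesis by linarith
      qed
      finally show "norm (c n * (\<Sum>N\<in>F n. w n N powr r) - D n powr r - 0) < e" by simp
    qed
  qed
  have "(\<lambda>n. D n powr r) \<longlonglongrightarrow> S powr r" using S by (intro tendsto_powr DS) auto
  from tendsto_add[OF dif this] show ?thesis by simp
qed


lemma rho_diag:
  assumes b: "b \<ge> 2" shows "rho H b m m N = 1"
proof -
  have bp: "real b > 0" using b by simp
  define a where "a = 1 / real b ^ m"
  have ap: "a > 0" using bp by (simp add: a_def)
  have "icov H (pos b m N) (pos b m N + a) (pos b m N) (pos b m N + a) = a powr (2*H)"
    using ap by (simp add: icov_self)
  moreover have "(real b powr H) ^ m * a powr H = 1"
    using bp by (simp add: a_def powr_divide powr_realpow[symmetric] powr_powr powr_power mult.commute)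
  moreover have "a powr (2*H) = a powr H * a powr H" by (simp flip: powr_add)
  ultimately show ?thesis unfolding rho_def a_def[symmetric]
    by (metis (no_types, lifting) mult.assoc mult.left_commute mult_1_right)
qed

lemma sum_rev_pow:
  fixes f :: "nat \<Rightarrow> real"
  shows "(\<Sum>m=1..n. f (n - m)) = (\<Sum>k<n. f k)"
  by (rule sum.reindex_bij_witness[where i="\<lambda>k. n - k" and j="\<lambda>m. n - m"]) auto

lemma geo_le:
  fixes q :: real assumes "0 \<le> q" "q < 1"
  shows "(\<Sum>k<n. q ^ k) \<le> 1 / (1 - q)"
proof -
  have "(\<Sum>k<n. q ^ k) = (1 - q ^ n) / (1 - q)" using assms by (simp add: sum_gp_strict)
  also have "\<dots> \<le> 1 / (1 - q)" using assms by (intro divide_right_mono) auto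
  finally show ?thesis .
qed

definition wq :: "real \<Rightarrow> real \<Rightarrow> nat \<Rightarrow> nat \<Rightarrow> nat \<Rightarrow> real" where
  "wq H q b n N = (\<Sum>m=1..n. \<Sum>m'=1..n. q ^ (n - m) * q ^ (n - m') * rho H b m m' N)"

definition Dq :: "real \<Rightarrow> nat \<Rightarrow> real" where
  "Dq q n = (\<Sum>m=1..n. q ^ (n - m) * q ^ (n - m))"

context
  fixes M :: "'a measure" and W :: "real \<Rightarrow> 'a \<Rightarrow> real" and H q :: real and b :: nat
  assumes W: "is_fbm M H W" and H: "0 < H" "H < 1" and b: "b \<ge> 2" and q: "0 < q" "q < 1"
begin

definition "\<gamma> = max (real b powr (- (1 - H))) (real b powr (- 1 / 2))"
definition "\<mu> = max q \<gamma>"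
definition "CC = H * \<bar>2*H - 1\<bar> + 8"

lemma gam: "0 < \<gamma>" "\<gamma> < 1"
proof -
  have bp: "real b > 1" using b by simp
  have "real b powr (- (1 - H)) < 1" "real b powr (- 1 / 2) < 1" using bp H by (auto intro!: powr_less_one)
  thus "0 < \<gamma>" "\<gamma> < 1" using bp by (auto simp: \<gamma>_def less_max_iff_disj)
qed

lemma mu: "0 < \<mu>" "\<mu> < 1" "q \<le> \<mu>" "\<gamma> \<le> \<mu>"
  using gam q by (auto simp: \<mu>_def)

lemma pair_bound:
  assumes mm: "m < m'" "m' \<le> n"
  shows "(\<Sum>N<b^n. \<bar>rho H b m m' N\<bar>) \<le> real b ^ n * (CC * \<gamma> ^ m)"
proof -
  have bp: "real b \<ge> 1" using b by simp
  define K where "K = H * \<bar>2*H - 1\<bar>"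
  have K: "K \<ge> 0" using H by (simp add: K_def)
  have t1: "real b powr (- (1 - H) * real m') \<le> \<gamma> ^ m"
  proof -
    have "real b powr (- (1 - H) * real m') \<le> real b powr (- (1 - H) * real m)"
      using bp H mm by (intro powr_mono) (auto simp: mult_le_cancel_left)
    also have "\<dots> = (real b powr (- (1 - H))) ^ m" using bp by (simp add: powr_power mult.commute)
    also have "\<dots> \<le> \<gamma> ^ m" by (intro power_mono) (auto simp: \<gamma>_def)
    finally show ?thesis .
  qed
  have t2: "real b powr (- real m / 2) \<le> \<gamma> ^ m"
  proof -
    have "real b powr (- real m / 2) = (real b powr (- 1 / 2)) ^ m" using bp by (simp add: powr_power)
    also have "\<dots> \<le> \<gamma> ^ m" by (intro power_mono) (auto simp: \<gamma>_def)
    finally show ?thesis .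
  qed
  have t3: "1 / real b ^ m \<le> real b powr (- real m / 2)"
  proof -
    have "1 / real b ^ m = real b powr (- real m)" using bp by (simp add: powr_minus_divide powr_realpow)
    also have "\<dots> \<le> real b powr (- real m / 2)" using bp by (intro powr_mono) auto
    finally show ?thesis .
  qed
  have "(\<Sum>N<b^n. \<bar>rho H b m m' N\<bar>) \<le>
    real b ^ n * (K * real b powr (- (1 - H) * real m') + 4 / real b ^ m + 4 * real b powr (- real m / 2))"
    using rho_avg[OF W H b mm] by (simp add: K_def)
  also have "\<dots> \<le> real b ^ n * (K * \<gamma> ^ m + 4 * \<gamma> ^ m + 4 * \<gamma> ^ m)"
  proof -
    have i1: "K * real b powr (- (1 - H) * real m') \<le> K * \<gamma> ^ m" by (rule mult_left_mono[OF t1 K])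
    have i2: "4 / real b ^ m \<le> 4 * \<gamma> ^ m" using t3 t2 by simp
    have i3: "4 * real b powr (- real m / 2) \<le> 4 * \<gamma> ^ m" using t2 by simp
    have "K * real b powr (- (1 - H) * real m') + 4 / real b ^ m + 4 * real b powr (- real m / 2)
        \<le> K * \<gamma> ^ m + 4 * \<gamma> ^ m + 4 * \<gamma> ^ m" using i1 i2 i3 by linarith
    thus ?thesis by (rule mult_left_mono) simp
  qed
  also have "\<dots> = real b ^ n * (CC * \<gamma> ^ m)" by (simp add: CC_def K_def algebra_simps)
  finally show ?thesis .
qed

lemma pair_bound2:
  assumes mm: "m \<in> {1..n}" "m' \<in> {1..n}" "m \<noteq> m'"
  shows "q ^ (n - m) * q ^ (n - m') * (\<Sum>N<b^n. \<bar>rho H b m m' N\<bar>) \<le> real b ^ n * CC * \<mu> ^ n"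
proof -
  have CC: "CC \<ge> 0" using H by (simp add: CC_def)
  have key: "q ^ (n - k) * q ^ (n - k') * (\<Sum>N<b^n. \<bar>rho H b k k' N\<bar>) \<le> real b ^ n * CC * \<mu> ^ n"
    if kk: "k < k'" "k' \<le> n" for k k'
  proof -
    have "q ^ (n - k) * q ^ (n - k') * (\<Sum>N<b^n. \<bar>rho H b k k' N\<bar>) \<le> q ^ (n - k) * q ^ (n - k') * (real b ^ n * (CC * \<gamma> ^ k))"
      using pair_bound[OF kk] q by (intro mult_left_mono) auto
    also have "\<dots> = real b ^ n * CC * (q ^ (n - k) * \<gamma> ^ k) * q ^ (n - k')" by (simp add: ac_simps)
    also have "\<dots> \<le> real b ^ n * CC * (\<mu> ^ (n - k) * \<mu> ^ k) * 1"
    proof -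
      have a1: "q ^ (n - k) \<le> \<mu> ^ (n - k)" by (rule power_mono) (use q mu in auto)
      have a2: "\<gamma> ^ k \<le> \<mu> ^ k" by (rule power_mono) (use gam mu in auto)
      have a3: "q ^ (n - k') \<le> 1" by (rule power_le_one) (use q in auto)
      have a4: "q ^ (n - k) * \<gamma> ^ k \<le> \<mu> ^ (n - k) * \<mu> ^ k"
        by (rule mult_mono[OF a1 a2]) (use mu gam in auto)
      have a5: "0 \<le> real b ^ n * CC" using CC by simp
      have le: "real b ^ n * CC * (q ^ (n - k) * \<gamma> ^ k) \<le> real b ^ n * CC * (\<mu> ^ (n - k) * \<mu> ^ k)"
        by (rule mult_left_mono[OF a4 a5])
      have a6: "0 \<le> real b ^ n * CC * (\<mu> ^ (n - k) * \<mu> ^ k)" using a5 mu by simp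
      show ?thesis by (rule mult_mono[OF le a3 a6]) (use q in simp)
    qed
    also have "\<mu> ^ (n - k) * \<mu> ^ k = \<mu> ^ n" using kk by (simp flip: power_add)
    finally show ?thesis by simp
  qed
  show ?thesis
  proof (cases "m < m'")
    case True thus ?thesis using key[of m m'] mm by auto
  next
    case False
    hence "m' < m" using mm by simp
    hence k2: "q ^ (n - m') * q ^ (n - m) * (\<Sum>N<b^n. \<bar>rho H b m' m N\<bar>) \<le> real b ^ n * CC * \<mu> ^ n"
      using key[of m' m] mm by simp
    have "(\<Sum>N<b^n. \<bar>rho H b m' m N\<bar>) = (\<Sum>N<b^n. \<bar>rho H b m m' N\<bar>)"
      by (intro sum.cong refl arg_cong[where f=abs] rho_sym)
    thus ?thesis using k2 by (simp only: mult.commute[of "q ^ (n - m')"])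
  qed
qed

lemma row_split:
  fixes f :: "nat \<Rightarrow> real" and g :: "nat \<Rightarrow> real"
  assumes "m \<in> S" "finite S" "g m = 1"
  shows "(\<Sum>m'\<in>S. f m' * g m') = (\<Sum>m'\<in>S. f m' * (if m = m' then 0 else g m')) + f m"
proof -
  have "(\<Sum>m'\<in>S. f m' * g m') = (\<Sum>m'\<in>S. f m' * (if m = m' then 0 else g m') + (if m = m' then f m' else 0))"
    by (rule sum.cong) (use assms in auto)
  also have "\<dots> = (\<Sum>m'\<in>S. f m' * (if m = m' then 0 else g m')) + (\<Sum>m'\<in>S. if m = m' then f m' else 0)"
    by (rule sum.distrib)
  also have "(\<Sum>m'\<in>S. if m = m' then f m' else 0) = f m" using assms by (simp add: sum.delta)
  finally show ?thesis .
qed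

lemma wq_minus:
  "wq H q b n N - Dq q n = (\<Sum>m=1..n. \<Sum>m'=1..n. q ^ (n - m) * q ^ (n - m') *
          (if m = m' then 0 else rho H b m m' N))"
proof -
  have "wq H q b n N = (\<Sum>m=1..n. (\<Sum>m'=1..n. q ^ (n - m) * q ^ (n - m') *
          (if m = m' then 0 else rho H b m m' N)) + q ^ (n - m) * q ^ (n - m))"
    unfolding wq_def
  proof (rule sum.cong[OF refl])
    fix m assume m: "m \<in> {1..n}"
    show "(\<Sum>m'=1..n. q ^ (n - m) * q ^ (n - m') * rho H b m m' N) =
       (\<Sum>m'=1..n. q ^ (n - m) * q ^ (n - m') * (if m = m' then 0 else rho H b m m' N)) + q ^ (n - m) * q ^ (n - m)"
      using row_split[where m=m and S="{1..n}" and f="\<lambda>m'. q ^ (n - m) * q ^ (n - m')" and g="\<lambda>m'. rho H b m m' N"]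
        m rho_diag[OF b, of H m N] by simp
  qed
  thus ?thesis by (simp add: Dq_def sum.distrib)
qed

lemma offdiag_sum:
  "(\<Sum>N<b^n. \<bar>wq H q b n N - Dq q n\<bar>) \<le> real n ^ 2 * (real b ^ n * CC * \<mu> ^ n)"
proof -
  define T where "T = (\<lambda>m m' N. if m = m' then 0 else \<bar>rho H b m m' N\<bar>)"
  have pt: "\<bar>wq H q b n N - Dq q n\<bar> \<le> (\<Sum>m=1..n. \<Sum>m'=1..n. q ^ (n - m) * q ^ (n - m') * T m m' N)" for N
  proof -
    have "\<bar>wq H q b n N - Dq q n\<bar> \<le> (\<Sum>m=1..n. \<bar>\<Sum>m'=1..n. q ^ (n - m) * q ^ (n - m') *
          (if m = m' then 0 else rho H b m m' N)\<bar>)"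
      unfolding wq_minus by (rule sum_abs)
    also have "\<dots> \<le> (\<Sum>m=1..n. \<Sum>m'=1..n. \<bar>q ^ (n - m) * q ^ (n - m') * (if m = m' then 0 else rho H b m m' N)\<bar>)"
      by (rule sum_mono) (rule sum_abs)
    also have "\<dots> = (\<Sum>m=1..n. \<Sum>m'=1..n. q ^ (n - m) * q ^ (n - m') * T m m' N)"
    proof (rule sum.cong[OF refl], rule sum.cong[OF refl])
      fix m m'
      show "\<bar>q ^ (n - m) * q ^ (n - m') * (if m = m' then 0 else rho H b m m' N)\<bar> = q ^ (n - m) * q ^ (n - m') * T m m' N"
        using q unfolding T_def abs_mult by simp
    qed
    finally show ?thesis .
  qed
  have "(\<Sum>N<b^n. \<bar>wq H q b n N - Dq q n\<bar>) \<le> (\<Sum>N<b^n. \<Sum>m=1..n. \<Sum>m'=1..n. q ^ (n - m) * q ^ (n - m') * T m m' N)"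
    by (rule sum_mono) (rule pt)
  also have "\<dots> = (\<Sum>m=1..n. \<Sum>N<b^n. \<Sum>m'=1..n. q ^ (n - m) * q ^ (n - m') * T m m' N)"
    by (rule sum.swap)
  also have "\<dots> = (\<Sum>m=1..n. \<Sum>m'=1..n. \<Sum>N<b^n. q ^ (n - m) * q ^ (n - m') * T m m' N)"
    by (rule sum.cong[OF refl]) (rule sum.swap)
  also have "\<dots> = (\<Sum>m=1..n. \<Sum>m'=1..n. q ^ (n - m) * q ^ (n - m') * (\<Sum>N<b^n. T m m' N))"
    by (rule sum.cong[OF refl], rule sum.cong[OF refl]) (rule sum_distrib_left[symmetric])
  also have "\<dots> \<le> (\<Sum>m=1..n. \<Sum>m'=1..n. real b ^ n * CC * \<mu> ^ n)"
  proof (rule sum_mono, rule sum_mono)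
    fix m m' assume mm: "m \<in> {1..n}" "m' \<in> {1..n}"
    show "q ^ (n - m) * q ^ (n - m') * (\<Sum>N<b^n. T m m' N) \<le> real b ^ n * CC * \<mu> ^ n"
    proof (cases "m = m'")
      case True
      have "CC \<ge> 0" using H by (simp add: CC_def)
      thus ?thesis using True mu by (simp add: T_def)
    next
      case False
      have "(\<Sum>N<b^n. T m m' N) = (\<Sum>N<b^n. \<bar>rho H b m m' N\<bar>)" using False by (simp add: T_def)
      thus ?thesis using pair_bound2[OF mm False] by simp
    qed
  qed
  also have "\<dots> = real n ^ 2 * (real b ^ n * CC * \<mu> ^ n)" by (simp add: power2_eq_square)
  finally show ?thesis .
qed

lemma wq_nonneg: "0 \<le> wq H q b n N"
proof -
  have "0 \<le> (\<Sum>j\<in>{1..n}. \<Sum>k\<in>{1..n}. (q ^ (n - j) * (real b powr H) ^ j) * (q ^ (n - k) * (real b powr H) ^ k) *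
      icov H (pos b j N) (pos b j N + 1 / real b ^ j) (pos b k N) (pos b k N + 1 / real b ^ k))"
    by (rule incr_psd[OF W]) (auto simp: pos_nonneg)
  also have "\<dots> = wq H q b n N" unfolding wq_def rho_def
    by (intro sum.cong refl) (simp add: ac_simps)
  finally show ?thesis .
qed

lemma qsum: "(\<Sum>m=1..n. q ^ (n - m)) \<le> 1 / (1 - q)"
  using sum_rev_pow[of "\<lambda>k. q ^ k" n] geo_le[of q n] q by simp

lemma wq_le: "wq H q b n N \<le> (1 / (1 - q))\<^sup>2"
proof -
  have "wq H q b n N \<le> (\<Sum>m=1..n. \<Sum>m'=1..n. q ^ (n - m) * q ^ (n - m'))"
    unfolding wq_def
  proof (rule sum_mono, rule sum_mono)
    fix m m'
    have "q ^ (n - m) * q ^ (n - m') * rho H b m m' N \<le> q ^ (n - m) * q ^ (n - m') * 1"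
      using rho_le1[OF W b H(1), of m m' N] q by (intro mult_left_mono) auto
    thus "q ^ (n - m) * q ^ (n - m') * rho H b m m' N \<le> q ^ (n - m) * q ^ (n - m')" by simp
  qed
  also have "\<dots> = (\<Sum>m=1..n. q ^ (n - m)) * (\<Sum>m'=1..n. q ^ (n - m'))"
    by (simp add: sum_product)
  also have "\<dots> \<le> (1 / (1 - q)) * (1 / (1 - q))"
    using qsum q by (intro mult_mono) (auto intro: sum_nonneg)
  finally show ?thesis by (simp add: power2_eq_square)
qed

lemma Dq_eq: "Dq q n = (\<Sum>k<n. (q\<^sup>2) ^ k)"
  unfolding Dq_def using sum_rev_pow[of "\<lambda>k. (q\<^sup>2) ^ k" n]
  by (simp add: power_mult_distrib power2_eq_square power_mult[symmetric] mult.commute flip: power_add)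

lemma Dq_bounds: "0 \<le> Dq q n" "Dq q n \<le> (1 / (1 - q))\<^sup>2"
proof -
  show "0 \<le> Dq q n" unfolding Dq_eq by (intro sum_nonneg) auto
  have "Dq q n \<le> 1 / (1 - q\<^sup>2)" unfolding Dq_eq using q
    by (intro geo_le) (auto simp: power_less_one_iff abs_square_less_1)
  also have "1 / (1 - q\<^sup>2) \<le> (1 / (1 - q))\<^sup>2"
  proof -
    have "(1 - q)\<^sup>2 \<le> 1 - q\<^sup>2" using q by (simp add: power2_eq_square algebra_simps)
    moreover have "0 < (1 - q)\<^sup>2" using q by simp
    moreover have "0 < 1 - q\<^sup>2" using q by (simp add: abs_square_less_1)
    ultimately have "1 / (1 - q\<^sup>2) \<le> 1 / (1 - q)\<^sup>2" by (intro divide_left_mono mult_pos_pos) auto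
    thus ?thesis by (simp add: power_one_over)
  qed
  finally show "Dq q n \<le> (1 / (1 - q))\<^sup>2" .
qed

lemma Dq_lim: "(\<lambda>n. Dq q n) \<longlonglongrightarrow> 1 / (1 - q\<^sup>2)"
proof -
  have "(\<lambda>k. (q\<^sup>2) ^ k) sums (1 / (1 - q\<^sup>2))" using q
    by (intro geometric_sums) (simp add: abs_square_less_1)
  thus ?thesis unfolding Dq_eq sums_def .
qed

lemma nsq_lim: "(\<lambda>n. real n ^ 2 * \<mu> ^ n) \<longlonglongrightarrow> 0"
proof -
  define s where "s = sqrt \<mu>"
  have s: "0 < s" "s < 1" using mu by (auto simp: s_def)
  have "(\<lambda>n. real n * s ^ n) \<longlonglongrightarrow> 0" using s by (intro powser_times_n_limit_0) simp
  hence "(\<lambda>n. (real n * s ^ n) ^ 2) \<longlonglongrightarrow> 0 ^ 2" by (intro tendsto_power)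
  moreover have "(real n * s ^ n) ^ 2 = real n ^ 2 * \<mu> ^ n" for n
  proof -
    have s2: "s ^ 2 = \<mu>" using mu by (simp add: s_def)
    have "(s ^ n) ^ 2 = (s ^ 2) ^ n" by (metis power_mult mult.commute)
    thus ?thesis by (simp add: power_mult_distrib s2)
  qed
  ultimately show ?thesis by simp
qed

theorem det_limit:
  assumes r: "r > 0"
  shows "(\<lambda>n. (1 / real b ^ n) * (\<Sum>N\<in>{..<b^n}. wq H q b n N powr r)) \<longlonglongrightarrow> (1 / (1 - q\<^sup>2)) powr r"
proof (rule avg_powr_conv[where D="Dq q" and Bd="(1 / (1 - q))\<^sup>2"])
  show "0 < r" by fact
  show "0 \<le> (1 / (1 - q))\<^sup>2" by simp
  show "0 \<le> wq H q b n N \<and> wq H q b n N \<le> (1 / (1 - q))\<^sup>2" for n N using wq_nonneg wq_le by auto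
  show "0 \<le> Dq q n \<and> Dq q n \<le> (1 / (1 - q))\<^sup>2" for n using Dq_bounds by auto
  show "0 \<le> 1 / real b ^ n" for n by simp
  show "1 / real b ^ n * real (card {..<b ^ n}) = 1" for n using b by simp
  show "(\<lambda>n. Dq q n) \<longlonglongrightarrow> 1 / (1 - q\<^sup>2)" by (rule Dq_lim)
  show "0 < 1 / (1 - q\<^sup>2)" using q by (simp add: abs_square_less_1)
  show "(\<lambda>n. 1 / real b ^ n * (\<Sum>N\<in>{..<b ^ n}. \<bar>wq H q b n N - Dq q n\<bar>)) \<longlonglongrightarrow> 0"
  proof (rule Lim_null_comparison)
    have CC: "CC \<ge> 0" using H by (simp add: CC_def)
    show "\<forall>\<^sub>F n in sequentially. norm (1 / real b ^ n * (\<Sum>N\<in>{..<b ^ n}. \<bar>wq H q b n N - Dq q n\<bar>)) \<le> CC * (real n ^ 2 * \<mu> ^ n)"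
    proof (intro always_eventually allI)
      fix n
      have bp: "real b ^ n > 0" using b by simp
      have "norm (1 / real b ^ n * (\<Sum>N\<in>{..<b ^ n}. \<bar>wq H q b n N - Dq q n\<bar>)) =
            (\<Sum>N<b ^ n. \<bar>wq H q b n N - Dq q n\<bar>) / real b ^ n" by (simp add: abs_mult)
      also have "\<dots> \<le> real n ^ 2 * (real b ^ n * CC * \<mu> ^ n) / real b ^ n"
        by (rule divide_right_mono[OF offdiag_sum]) (use bp in simp)
      also have "\<dots> = CC * (real n ^ 2 * \<mu> ^ n)"
      proof -
        have gen: "x * (B * C * m) / B = C * (x * m)" if "B > 0" for x B C m :: real
          using that by (simp add: field_simps)
        show ?thesis by (rule gen[OF bp])
      qed
      finally show "norm (1 / real b ^ n * (\<Sum>N\<in>{..<b ^ n}. \<bar>wq H q b n N - Dq q n\<bar>)) \<le> CC * (real n ^ 2 * \<mu> ^ n)" .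
    qed
    show "(\<lambda>n. CC * (real n ^ 2 * \<mu> ^ n)) \<longlonglongrightarrow> 0"
      using tendsto_mult_right_zero[OF nsq_lim, of CC] by simp
  qed
qed

end


lemma Rd_Suc: "Rd b u (Suc m) = Rd b u m + u (Suc m) * b ^ m"
  by (simp add: Rd_def)

lemma Rd_less: "(\<And>i. i \<in> {1..m} \<Longrightarrow> u i < b) \<Longrightarrow> Rd b u m < b ^ m"
proof (induction m)
  case 0 thus ?case by (simp add: Rd_def)
next
  case (Suc m)
  have ih: "Rd b u m < b ^ m" using Suc by auto
  have us: "u (Suc m) < b" using Suc.prems by auto
  hence "u (Suc m) \<le> b - 1" by simp
  hence "Rd b u m + u (Suc m) * b ^ m \<le> (b ^ m - 1) + (b - 1) * b ^ m" using ih
    by (intro add_mono mult_right_mono) auto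
  also have "\<dots> < b ^ Suc m" using us ih by (cases b) (auto simp: algebra_simps)
  finally show ?case by (simp add: Rd_Suc)
qed

lemma Rd_mod:
  assumes "\<And>i. i \<in> {1..n} \<Longrightarrow> u i < b" "m \<le> n"
  shows "Rd b u n mod b ^ m = Rd b u m"
  using assms(2)
proof (induction n rule: dec_induct)
  case base
  have "Rd b u m < b ^ m" by (rule Rd_less) (use assms in auto)
  thus ?case by simp
next
  case (step k)
  have "b ^ m dvd u (Suc k) * b ^ k" using step by (intro dvd_mult le_imp_power_dvd) auto
  hence "Rd b u (Suc k) mod b ^ m = Rd b u k mod b ^ m" by (simp add: Rd_Suc mod_add_right_eq[symmetric])
  thus ?case using step by simp
qed

lemma Rd_digits: "Rd b (\<lambda>i. N div b ^ (i - 1) mod b) n = N mod b ^ n"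
proof (induction n)
  case 0 thus ?case by (simp add: Rd_def)
next
  case (Suc n)
  have "N mod (b ^ n * b) = b ^ n * (N div b ^ n mod b) + N mod b ^ n" by (rule mod_mult2_eq)
  thus ?case using Suc by (simp add: Rd_Suc algebra_simps)
qed

lemma Rd_bij:
  assumes b: "b \<ge> 2"
  shows "bij_betw (\<lambda>u. Rd b u n) (PiE {1..n} (\<lambda>_. {..<b})) {..<b ^ n}"
proof -
  let ?P = "PiE {1..n} (\<lambda>_. {..<b})"
  have img: "(\<lambda>u. Rd b u n) ` ?P = {..<b ^ n}"
  proof
    show "(\<lambda>u. Rd b u n) ` ?P \<subseteq> {..<b ^ n}" by (auto intro!: Rd_less simp: PiE_def Pi_def)
    show "{..<b ^ n} \<subseteq> (\<lambda>u. Rd b u n) ` ?P"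
    proof
      fix N assume N: "N \<in> {..<b ^ n}"
      define u where "u = restrict (\<lambda>i. N div b ^ (i - 1) mod b) {1..n}"
      have "u \<in> ?P" using b by (auto simp: u_def)
      moreover have "Rd b u n = N"
      proof -
        have "Rd b u n = Rd b (\<lambda>i. N div b ^ (i - 1) mod b) n" by (rule Rd_cong) (simp add: u_def)
        also have "\<dots> = N" using N Rd_digits[of b N n] by simp
        finally show ?thesis .
      qed
      ultimately show "N \<in> (\<lambda>u. Rd b u n) ` ?P" by (metis image_eqI)
    qed
  qed
  have "card ?P = b ^ n" by (simp add: card_PiE)
  hence "card ((\<lambda>u. Rd b u n) ` ?P) = card ?P" unfolding img by simp
  hence "inj_on (\<lambda>u. Rd b u n) ?P" by (rule eq_card_imp_inj_on[rotated]) (simp add: finite_PiE)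
  thus ?thesis using img by (simp add: bij_betw_def)
qed



definition Vn :: "real \<Rightarrow> real \<Rightarrow> nat \<Rightarrow> nat \<Rightarrow> nat \<Rightarrow> real" where
  "Vn H \<alpha> b n N = (\<Sum>m=1..n. \<Sum>m'=1..n. (1 / \<alpha> ^ m) * (1 / \<alpha> ^ m') *
      icov H (pos b m N) (pos b m N + 1 / real b ^ m) (pos b m' N) (pos b m' N + 1 / real b ^ m'))"

lemma vvar_Vn:
  assumes u: "u \<in> PiE {1..n} (\<lambda>_. {..<b})"
  shows "vvar H \<alpha> b n u = Vn H \<alpha> b n (Rd b u n)"
proof -
  have R: "Rd b u m = Rd b u n mod b ^ m" if "m \<in> {1..n}" for m
    using Rd_mod[of n u b m] u that by (auto simp: PiE_def Pi_def)
  have e1: "real (Rd b u m) / real b ^ m = pos b m (Rd b u n)" if "m \<in> {1..n}" for m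
    using R[OF that] by (simp add: pos_def)
  have e2: "(real (Rd b u m) + 1) / real b ^ m = pos b m (Rd b u n) + 1 / real b ^ m" if "m \<in> {1..n}" for m
    using R[OF that] by (simp add: pos_def add_divide_distrib)
  show ?thesis unfolding vvar_def Vn_def
    by (intro sum.cong refl) (simp add: e1 e2)
qed

lemma wq_Vn:
  assumes \<alpha>: "\<alpha> > 0" and b: "b \<ge> 2"
  shows "wq H (\<alpha> * real b powr H) b n N = (\<alpha> * real b powr H) ^ (2*n) * Vn H \<alpha> b n N"
proof -
  define \<beta> where "\<beta> = real b powr H"
  define q where "q = \<alpha> * \<beta>"
  have bp: "\<beta> > 0" using b by (simp add: \<beta>_def)
  have key: "q ^ (n - m) * \<beta> ^ m = q ^ n / \<alpha> ^ m" if "m \<le> n" for m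
  proof -
    have "q ^ n = q ^ (n - m) * q ^ m" using that by (simp flip: power_add)
    also have "q ^ m = \<alpha> ^ m * \<beta> ^ m" by (simp add: q_def power_mult_distrib)
    finally show ?thesis using \<alpha> by (simp add: field_simps)
  qed
  have "wq H q b n N = (\<Sum>m=1..n. \<Sum>m'=1..n. q ^ (2*n) * ((1 / \<alpha> ^ m) * (1 / \<alpha> ^ m') *
      icov H (pos b m N) (pos b m N + 1 / real b ^ m) (pos b m' N) (pos b m' N + 1 / real b ^ m')))"
    unfolding wq_def rho_def \<beta>_def[symmetric]
  proof (rule sum.cong[OF refl], rule sum.cong[OF refl])
    fix m m' assume mm: "m \<in> {1..n}" "m' \<in> {1..n}"
    have k1: "q ^ (n - m) * \<beta> ^ m = q ^ n / \<alpha> ^ m" using mm by (intro key) auto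
    have k2: "q ^ (n - m') * \<beta> ^ m' = q ^ n / \<alpha> ^ m'" using mm by (intro key) auto
    define X where "X = icov H (pos b m N) (pos b m N + 1 / real b ^ m) (pos b m' N) (pos b m' N + 1 / real b ^ m')"
    have q2: "q ^ (2*n) = q ^ n * q ^ n" by (simp add: mult_2 power_add)
    have "q ^ (n - m) * q ^ (n - m') * (\<beta> ^ m * \<beta> ^ m' * X) = (q ^ (n - m) * \<beta> ^ m) * (q ^ (n - m') * \<beta> ^ m') * X"
      by (simp add: ac_simps)
    also have "\<dots> = (q ^ n / \<alpha> ^ m) * (q ^ n / \<alpha> ^ m') * X" by (simp only: k1 k2)
    also have "\<dots> = (q ^ n * q ^ n) * ((1 / \<alpha> ^ m) * (1 / \<alpha> ^ m') * X)" by (simp add: divide_inverse ac_simps)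
    finally have eq: "q ^ (n - m) * q ^ (n - m') * (\<beta> ^ m * \<beta> ^ m' * X) = (q ^ n * q ^ n) * ((1 / \<alpha> ^ m) * (1 / \<alpha> ^ m') * X)" .
    show "q ^ (n - m) * q ^ (n - m') * (\<beta> ^ m * \<beta> ^ m' *
        icov H (pos b m N) (pos b m N + 1 / real b ^ m) (pos b m' N) (pos b m' N + 1 / real b ^ m')) =
      q ^ (2 * n) * (1 / \<alpha> ^ m * (1 / \<alpha> ^ m') *
        icov H (pos b m N) (pos b m N + 1 / real b ^ m) (pos b m' N) (pos b m' N + 1 / real b ^ m'))"
      unfolding q2 using eq unfolding X_def .
  qed
  also have "\<dots> = q ^ (2*n) * Vn H \<alpha> b n N" unfolding Vn_def by (simp add: sum_distrib_left)
  finally show ?thesis by (simp add: q_def \<beta>_def)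
qed



theorem proposition3p4:
  fixes M :: "'a measure" and H \<alpha> p :: real and b :: nat
    and W :: "real \<Rightarrow> 'a \<Rightarrow> real" and U :: "nat \<Rightarrow> 'a \<Rightarrow> nat"
    and G :: "nat \<Rightarrow> 'a \<Rightarrow> real"
  assumes "prob_space M"
    and "0 < H" "H < 1" "0 < \<alpha>" "\<alpha> < 1" "b \<ge> 2" "\<alpha> * real b powr H < 1"
    and "p = 1 / H"
    and "is_fbm M H W"
    and "\<And>i. U i \<in> measurable M (count_space UNIV)"
    and "prob_space.indep_vars M (\<lambda>_. count_space UNIV) U {1..}"
    and "\<And>i. i \<ge> 1 \<Longrightarrow> distr M (count_space UNIV) (U i) = uniform_measure (count_space UNIV) {..<b}"
    and "prob_space.indep_set M (sigma_W M W) (sigma_U M U)"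
    and "\<And>n \<omega>. G n \<omega> = (\<Sum>m=1..n. (1 / \<alpha> ^ m) *
            (W ((real (digitsum b U m \<omega>) + 1) / real b ^ m) \<omega>
             - W (real (digitsum b U m \<omega>) / real b ^ m) \<omega>))"
  shows "(\<lambda>n. (\<alpha> powr p * real b) ^ n * prob_space.expectation M (\<lambda>\<omega>. \<bar>G n \<omega>\<bar> powr p))
           \<longlonglongrightarrow> c_H H / (1 - \<alpha>\<^sup>2 * real b powr (2*H)) powr (p / 2)"
proof -
  note A = assms
  have H: "0 < H" "H < 1" and b: "b \<ge> 2" and \<alpha>: "0 < \<alpha>" using A by auto
  have W: "is_fbm M H W" by fact
  define q where "q = \<alpha> * real b powr H"
  have q: "0 < q" "q < 1" using A by (auto simp: q_def)
  have p: "p > 0" using A by simp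
  define r where "r = p / 2"
  have r: "r > 0" using p by (simp add: r_def)
  have bp: "real b > 0" using b by simp
  have seq: "(\<alpha> powr p * real b) ^ n * prob_space.expectation M (\<lambda>\<omega>. \<bar>G n \<omega>\<bar> powr p) =
      gmom p * ((1 / real b ^ n) * (\<Sum>N\<in>{..<b^n}. wq H q b n N powr r))" for n
  proof -
    have E: "prob_space.expectation M (\<lambda>\<omega>. \<bar>G n \<omega>\<bar> powr p) =
       (\<Sum>u\<in>PiE {1..n} (\<lambda>_. {..<b}). vvar H \<alpha> b n u powr (p/2)) * gmom p / real b ^ n"
      by (rule expectation_decomp[OF A(1) b p W A(10) A(11) A(12) A(13) A(14)])
    have S: "(\<Sum>u\<in>PiE {1..n} (\<lambda>_. {..<b}). vvar H \<alpha> b n u powr r) = (\<Sum>N\<in>{..<b^n}. Vn H \<alpha> b n N powr r)"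
    proof -
      have "(\<Sum>u\<in>PiE {1..n} (\<lambda>_. {..<b}). vvar H \<alpha> b n u powr r) =
            (\<Sum>u\<in>PiE {1..n} (\<lambda>_. {..<b}). Vn H \<alpha> b n (Rd b u n) powr r)"
        by (intro sum.cong refl) (simp add: vvar_Vn)
      also have "\<dots> = (\<Sum>N\<in>{..<b^n}. Vn H \<alpha> b n N powr r)"
        by (rule sum.reindex_bij_betw[OF Rd_bij[OF b]])
      finally show ?thesis .
    qed
    have key: "(\<alpha> powr p) ^ n * Vn H \<alpha> b n N powr r = wq H q b n N powr r / real b ^ n" for N
    proof -
      have wq: "wq H q b n N = q ^ (2*n) * Vn H \<alpha> b n N" unfolding q_def by (rule wq_Vn[OF \<alpha> b])
      have qp: "q ^ (2*n) > 0" using q by simp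
      have Vnn: "Vn H \<alpha> b n N \<ge> 0"
      proof -
        have "0 \<le> wq H q b n N" by (rule wq_nonneg[OF W H b q])
        thus ?thesis using qp unfolding wq by (simp add: zero_le_mult_iff)
      qed
      have "wq H q b n N powr r = (q ^ (2*n)) powr r * Vn H \<alpha> b n N powr r"
        unfolding wq using qp Vnn by (simp add: powr_mult)
      also have "(q ^ (2*n)) powr r = (\<alpha> powr p) ^ n * real b ^ n"
      proof -
        have "(q ^ (2*n)) powr r = q powr (real (2*n) * r)" using q by (simp add: powr_realpow[symmetric] powr_powr)
        also have "real (2*n) * r = real n * p" by (simp add: r_def)
        also have "q powr (real n * p) = \<alpha> powr (real n * p) * (real b powr H) powr (real n * p)"
          unfolding q_def using \<alpha> bp by (simp add: powr_mult)
        also have "\<alpha> powr (real n * p) = (\<alpha> powr p) ^ n" using \<alpha> by (simp add: powr_power)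
        also have "(real b powr H) powr (real n * p) = real b ^ n"
          using bp A(8) H by (simp add: powr_powr powr_realpow)
        finally show ?thesis .
      qed
      finally show ?thesis using bp by (simp add: field_simps)
    qed
    have "(\<alpha> powr p * real b) ^ n * prob_space.expectation M (\<lambda>\<omega>. \<bar>G n \<omega>\<bar> powr p) =
       (\<alpha> powr p) ^ n * (\<Sum>N\<in>{..<b^n}. Vn H \<alpha> b n N powr r) * gmom p"
      unfolding E using S bp by (simp add: r_def power_mult_distrib field_simps)
    also have "\<dots> = (\<Sum>N\<in>{..<b^n}. (\<alpha> powr p) ^ n * Vn H \<alpha> b n N powr r) * gmom p"
      by (simp add: sum_distrib_left)
    also have "\<dots> = (\<Sum>N\<in>{..<b^n}. wq H q b n N powr r / real b ^ n) * gmom p"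
      by (simp add: key)
    also have "\<dots> = gmom p * ((1 / real b ^ n) * (\<Sum>N\<in>{..<b^n}. wq H q b n N powr r))"
      by (simp add: sum_divide_distrib[symmetric] field_simps)
    finally show ?thesis .
  qed
  have lim: "(\<lambda>n. gmom p * ((1 / real b ^ n) * (\<Sum>N\<in>{..<b^n}. wq H q b n N powr r))) \<longlonglongrightarrow>
       gmom p * (1 / (1 - q\<^sup>2)) powr r"
    by (intro tendsto_mult_left det_limit[OF W H b q r])
  have const: "gmom p * (1 / (1 - q\<^sup>2)) powr r = c_H H / (1 - \<alpha>\<^sup>2 * real b powr (2*H)) powr (p / 2)"
  proof -
    have q2: "q\<^sup>2 = \<alpha>\<^sup>2 * real b powr (2*H)"
      unfolding q_def using bp by (simp add: power_mult_distrib powr_power[symmetric] mult.commute)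
        (simp add: powr_realpow[symmetric] powr_powr mult.commute)
    have pos: "1 - q\<^sup>2 > 0" using q by (simp add: abs_square_less_1)
    have cH: "c_H H = gmom p"
    proof -
      have e1: "1 / (2*H) = p / 2" using A(8) by simp
      have e2: "(H + 1) / (2*H) = (p + 1) / 2" using A(8) H by (simp add: field_simps)
      show ?thesis unfolding c_H_def gmom_def e1 e2 ..
    qed
    show ?thesis using pos unfolding q2[symmetric] cH r_def by (simp add: powr_divide)
  qed
  show ?thesis unfolding seq const[symmetric] by (rule lim)
qed


end
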